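(* Let $M$ be a $3$-connected simple matroid with a $3$-connected simple minor $N$. Suppose that $(C^*,p)$ is a disconnected $(M,N)$-vertbarrier with line $L$, and that $y\in L$ is not vertically $N$-contractible in $M$. Then there is an $(M,N)$-vertbarrier $(D^*,y)$ with $L-y\subseteq D^*$.
   Context: An element $y$ is vertically $N$-contractible in $M$ if $\mathrm{si}(M/y)$ (the simplification) is a $3$-connected matroid with an $N$-minor. An $(M,N)$-vertbarrier is a pair $(C^*,p)$ where $C^*$ is a cocircuit of $M$ of rank $3$, $p\in\mathrm{cl}_M(C^* )-C^*$, and $\mathrm{si}(M/\{x,p\})$ is $3$-connected with an $N$-minor for some $x\in C^*$. It is disconnected if $M|(C^*\cup p)$ is disconnected; in that case $M|(C^*\cup p)$ is the direct sum of a rank-$2$ restriction (a line with at least three elements) and a single coloop, and the ground set of the rank-$2$ part is called the line of $(C^*,p)$. *)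

theory Defs
  imports Main
begin

record 'a matroid =
  ground :: "'a set"
  indep :: "'a set \<Rightarrow> bool"

definition matroid :: "('a, 'c) matroid_scheme \<Rightarrow> bool" where
  "matroid M \<longleftrightarrow> finite (ground M) \<and> indep M {} \<and>
     (\<forall>I. indep M I \<longrightarrow> I \<subseteq> ground M) \<and>
     (\<forall>I J. indep M J \<and> I \<subseteq> J \<longrightarrow> indep M I) \<and>
     (\<forall>I J. indep M I \<and> indep M J \<and> card I < card J \<longrightarrow>
        (\<exists>x\<in>J - I. indep M (insert x I)))"

definition rk :: "'a matroid \<Rightarrow> 'a set \<Rightarrow> nat" where
  "rk M X = Max (card ` {I. I \<subseteq> X \<and> indep M I})"

definition cl :: "'a matroid \<Rightarrow> 'a set \<Rightarrow> 'a set" where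
  "cl M X = {x \<in> ground M. rk M (insert x X) = rk M X}"

definition basis :: "'a matroid \<Rightarrow> 'a set \<Rightarrow> bool" where
  "basis M B \<longleftrightarrow> indep M B \<and> (\<forall>I. indep M I \<and> B \<subseteq> I \<longrightarrow> I = B)"

definition dual :: "'a matroid \<Rightarrow> 'a matroid" where
  "dual M = \<lparr>ground = ground M,
     indep = (\<lambda>I. I \<subseteq> ground M \<and> (\<exists>B. basis M B \<and> I \<inter> B = {}))\<rparr>"

definition circuit :: "'a matroid \<Rightarrow> 'a set \<Rightarrow> bool" where
  "circuit M C \<longleftrightarrow> C \<subseteq> ground M \<and> \<not> indep M C \<and> (\<forall>x\<in>C. indep M (C - {x}))"

definition cocircuit :: "'a matroid \<Rightarrow> 'a set \<Rightarrow> bool" where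
  "cocircuit M C \<longleftrightarrow> circuit (dual M) C"

definition restrict :: "'a matroid \<Rightarrow> 'a set \<Rightarrow> 'a matroid" where
  "restrict M Y = \<lparr>ground = ground M \<inter> Y, indep = (\<lambda>I. I \<subseteq> ground M \<inter> Y \<and> indep M I)\<rparr>"

definition delete :: "'a matroid \<Rightarrow> 'a set \<Rightarrow> 'a matroid" where
  "delete M X = restrict M (ground M - X)"

definition contract :: "'a matroid \<Rightarrow> 'a set \<Rightarrow> 'a matroid" where
  "contract M X = \<lparr>ground = ground M - X,
     indep = (\<lambda>I. I \<subseteq> ground M - X \<and> rk M (I \<union> X) = card I + rk M X)\<rparr>"

definition is_minor :: "'a matroid \<Rightarrow> 'a matroid \<Rightarrow> bool" where
  "is_minor M' M \<longleftrightarrow> (\<exists>C D. C \<subseteq> ground M \<and> D \<subseteq> ground M \<and> C \<inter> D = {} \<and>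
      M' = delete (contract M C) D)"

definition iso :: "'b matroid \<Rightarrow> 'a matroid \<Rightarrow> bool" where
  "iso N M \<longleftrightarrow> (\<exists>f. bij_betw f (ground N) (ground M) \<and>
      (\<forall>I. I \<subseteq> ground N \<longrightarrow> (indep N I \<longleftrightarrow> indep M (f ` I))))"

definition has_minor :: "'a matroid \<Rightarrow> 'b matroid \<Rightarrow> bool" where
  "has_minor M N \<longleftrightarrow> (\<exists>M'. is_minor M' M \<and> iso N M')"

definition loop :: "'a matroid \<Rightarrow> 'a \<Rightarrow> bool" where
  "loop M x \<longleftrightarrow> x \<in> ground M \<and> \<not> indep M {x}"

definition parallel :: "'a matroid \<Rightarrow> 'a \<Rightarrow> 'a \<Rightarrow> bool" where
  "parallel M x y \<longleftrightarrow> x \<in> ground M \<and> y \<in> ground M \<and> x \<noteq> y \<and>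
     indep M {x} \<and> indep M {y} \<and> \<not> indep M {x, y}"

definition simple :: "'a matroid \<Rightarrow> bool" where
  "simple M \<longleftrightarrow> (\<forall>x\<in>ground M. indep M {x}) \<and>
     (\<forall>x\<in>ground M. \<forall>y\<in>ground M. x \<noteq> y \<longrightarrow> indep M {x, y})"

text \<open>S is a simplification of M: delete all loops and all but one element
  of each parallel class (defined up to the choice of representatives).\<close>
definition simplification :: "'a matroid \<Rightarrow> 'a matroid \<Rightarrow> bool" where
  "simplification M S \<longleftrightarrow> (\<exists>T. T \<subseteq> ground M \<and> S = restrict M T \<and>
     (\<forall>t\<in>T. \<not> loop M t) \<and>
     (\<forall>x\<in>ground M. \<not> loop M x \<longrightarrow> (\<exists>!t. t \<in> T \<and> (t = x \<or> parallel M x t))))"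

definition tutte_sep :: "'a matroid \<Rightarrow> nat \<Rightarrow> 'a set \<Rightarrow> bool" where
  "tutte_sep M k X \<longleftrightarrow> X \<subseteq> ground M \<and> card X \<ge> k \<and> card (ground M - X) \<ge> k \<and>
     rk M X + rk M (ground M - X) < rk M (ground M) + k"

definition connected :: "'a matroid \<Rightarrow> bool" where
  "connected M \<longleftrightarrow> \<not> (\<exists>X. tutte_sep M 1 X)"

definition three_connected :: "'a matroid \<Rightarrow> bool" where
  "three_connected M \<longleftrightarrow> \<not> (\<exists>X. tutte_sep M 1 X) \<and> \<not> (\<exists>X. tutte_sep M 2 X)"

definition si_contract_good :: "'a matroid \<Rightarrow> 'b matroid \<Rightarrow> 'a set \<Rightarrow> bool" where
  "si_contract_good M N X \<longleftrightarrow>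
     (\<exists>S. simplification (contract M X) S \<and> three_connected S \<and> has_minor S N)"

definition vert_contractible :: "'a matroid \<Rightarrow> 'b matroid \<Rightarrow> 'a \<Rightarrow> bool" where
  "vert_contractible M N y \<longleftrightarrow> y \<in> ground M \<and> si_contract_good M N {y}"

definition vertbarrier :: "'a matroid \<Rightarrow> 'b matroid \<Rightarrow> 'a set \<Rightarrow> 'a \<Rightarrow> bool" where
  "vertbarrier M N C p \<longleftrightarrow> cocircuit M C \<and> rk M C = 3 \<and> p \<in> cl M C - C \<and>
     (\<exists>x\<in>C. si_contract_good M N {x, p})"

text \<open>L is the line of the disconnected vertbarrier (C,p): M|(C \<union> p) is the direct
  sum of M|L (rank 2, at least three elements) and a single (coloop) element.\<close>
definition line_of :: "'a matroid \<Rightarrow> 'a set \<Rightarrow> 'a \<Rightarrow> 'a set \<Rightarrow> bool" where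
  "line_of M C p L \<longleftrightarrow> L \<subseteq> insert p C \<and> card (insert p C - L) = 1 \<and>
     rk M L = 2 \<and> card L \<ge> 3 \<and> rk M (insert p C - L) = 1 \<and>
     rk M L + rk M (insert p C - L) = rk M (insert p C)"

end

theory Submission
  imports Defs
begin


locale mat =
  fixes M :: "'a matroid"
  assumes mat: "matroid M"
begin

abbreviation "E \<equiv> ground M"
abbreviation "r \<equiv> rk M"

lemma mat_all: "finite E \<and> indep M {} \<and>
     (\<forall>I. indep M I \<longrightarrow> I \<subseteq> E) \<and>
     (\<forall>I J. indep M J \<and> I \<subseteq> J \<longrightarrow> indep M I) \<and>
     (\<forall>I J. indep M I \<and> indep M J \<and> card I < card J \<longrightarrow>
        (\<exists>x\<in>J - I. indep M (insert x I)))"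
  using mat unfolding matroid_def .
lemma finE: "finite E" using mat_all by (elim conjE)
lemma indep_empty: "indep M {}" using mat_all by (elim conjE)
lemma indep_ground: "indep M I \<Longrightarrow> I \<subseteq> E"
proof -
  assume a: "indep M I"
  have "\<forall>I. indep M I \<longrightarrow> I \<subseteq> E" using mat_all by (elim conjE)
  then show ?thesis using a by blast
qed
lemma indep_subset: "indep M J \<Longrightarrow> I \<subseteq> J \<Longrightarrow> indep M I"
proof -
  assume a: "indep M J" "I \<subseteq> J"
  have "\<forall>I J. indep M J \<and> I \<subseteq> J \<longrightarrow> indep M I" using mat_all by (elim conjE)
  then show ?thesis using a by blast
qed
lemma augment: "indep M I \<Longrightarrow> indep M J \<Longrightarrow> card I < card J \<Longrightarrow> \<exists>x\<in>J - I. indep M (insert x I)"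
proof -
  assume a: "indep M I" "indep M J" "card I < card J"
  have "\<forall>I J. indep M I \<and> indep M J \<and> card I < card J \<longrightarrow>
        (\<exists>x\<in>J - I. indep M (insert x I))" using mat_all by (elim conjE)
  then show ?thesis using a by blast
qed
lemma indep_finite: "indep M I \<Longrightarrow> finite I" using indep_ground finE by (meson finite_subset)

lemma rk_fin: "finite (card ` {I. I \<subseteq> X \<and> indep M I})"
proof -
  have "{I. I \<subseteq> X \<and> indep M I} \<subseteq> Pow E" using indep_ground by blast
  then show ?thesis using finE by (meson finite_Pow_iff finite_imageI finite_subset)
qed

lemma rk_ex: "\<exists>I. I \<subseteq> X \<and> indep M I \<and> card I = r X"
proof -
  have "{} \<in> {I. I \<subseteq> X \<and> indep M I}" using indep_empty by blast
  then have "r X \<in> card ` {I. I \<subseteq> X \<and> indep M I}" unfolding rk_def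
    using rk_fin by (intro Max_in) auto
  then show ?thesis by auto
qed

lemma rk_ge: "I \<subseteq> X \<Longrightarrow> indep M I \<Longrightarrow> card I \<le> r X"
  unfolding rk_def using rk_fin by (intro Max_ge) auto

lemma rk_eqI: "(\<And>I. I \<subseteq> X \<Longrightarrow> indep M I \<Longrightarrow> card I \<le> k) \<Longrightarrow> I0 \<subseteq> X \<Longrightarrow> indep M I0 \<Longrightarrow> card I0 = k \<Longrightarrow> r X = k"
proof -
  assume a: "\<And>I. I \<subseteq> X \<Longrightarrow> indep M I \<Longrightarrow> card I \<le> k" and b: "I0 \<subseteq> X" "indep M I0" "card I0 = k"
  obtain I where "I \<subseteq> X" "indep M I" "card I = r X" using rk_ex by blast
  then have "r X \<le> k" using a[of I] by simp
  moreover have "k \<le> r X" using rk_ge[OF b(1,2)] b(3) by simp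
  ultimately show ?thesis by simp
qed

lemma rk_indep: "indep M I \<Longrightarrow> r I = card I"
proof -
  assume i: "indep M I"
  show ?thesis
  proof (rule rk_eqI[of I "card I" I])
    fix J assume "J \<subseteq> I" "indep M J" then show "card J \<le> card I" using indep_finite[OF i] card_mono by blast
  qed (use i in auto)
qed

lemma rk_mono: "X \<subseteq> Y \<Longrightarrow> r X \<le> r Y"
proof -
  assume "X \<subseteq> Y"
  obtain I where "I \<subseteq> X" "indep M I" "card I = r X" using rk_ex by blast
  then show ?thesis using rk_ge[of I Y] \<open>X \<subseteq> Y\<close> by auto
qed

lemma rk_le_card: "finite X \<Longrightarrow> r X \<le> card X"
proof -
  assume "finite X"
  obtain I where "I \<subseteq> X" "indep M I" "card I = r X" using rk_ex by blast
  then show ?thesis using card_mono[OF \<open>finite X\<close> \<open>I \<subseteq> X\<close>] by simp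
qed

lemma rk_inter: "r X = r (X \<inter> E)"
proof -
  obtain I where "I \<subseteq> X" "indep M I" "card I = r X" using rk_ex by blast
  then have "I \<subseteq> X \<inter> E" using indep_ground by auto
  then show ?thesis
    using rk_ge[of I "X \<inter> E"] rk_mono[of "X \<inter> E" X] \<open>card I = r X\<close> \<open>indep M I\<close> by simp
qed

lemma rk_le_E: "r X \<le> r E"
  using rk_inter[of X] rk_mono[of "X \<inter> E" E] by simp

lemma extend_aux: "\<forall>I. indep M I \<longrightarrow> I \<subseteq> X \<longrightarrow> r X - card I = k \<longrightarrow> (\<exists>J. I \<subseteq> J \<and> J \<subseteq> X \<and> indep M J \<and> card J = r X)"
proof (induction k)
  case 0
  show ?case
  proof (intro allI impI)
    fix I assume "indep M I" "I \<subseteq> X" "r X - card I = 0"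
    then have "card I = r X" using rk_ge[of I X] by simp
    then show "\<exists>J. I \<subseteq> J \<and> J \<subseteq> X \<and> indep M J \<and> card J = r X" using \<open>indep M I\<close> \<open>I \<subseteq> X\<close> by blast
  qed
next
  case (Suc k)
  show ?case
  proof (intro allI impI)
    fix I assume I: "indep M I" "I \<subseteq> X" "r X - card I = Suc k"
    obtain K where K: "K \<subseteq> X" "indep M K" "card K = r X" using rk_ex by blast
    have "card I < card K" using I K by linarith
    then obtain x where x: "x \<in> K - I" "indep M (insert x I)" using augment I K by blast
    have "card (insert x I) = Suc (card I)" using x indep_finite I by auto
    then have "r X - card (insert x I) = k" using I by linarith
    moreover have "insert x I \<subseteq> X" using x K I by auto
    ultimately obtain J where "insert x I \<subseteq> J \<and> J \<subseteq> X \<and> indep M J \<and> card J = r X"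
      using Suc.IH x by blast
    then show "\<exists>J. I \<subseteq> J \<and> J \<subseteq> X \<and> indep M J \<and> card J = r X" by blast
  qed
qed

lemma extend: "indep M I \<Longrightarrow> I \<subseteq> X \<Longrightarrow> \<exists>J. I \<subseteq> J \<and> J \<subseteq> X \<and> indep M J \<and> card J = r X"
  using extend_aux by blast

lemma submod: "r (A \<union> B) + r (A \<inter> B) \<le> r A + r B"
proof -
  obtain I where I: "I \<subseteq> A \<inter> B" "indep M I" "card I = r (A \<inter> B)" using rk_ex by blast
  have IAB: "I \<subseteq> A \<union> B" using I(1) by blast
  obtain J where J: "I \<subseteq> J" "J \<subseteq> A \<union> B" "indep M J" "card J = r (A \<union> B)"
    using extend[OF I(2) IAB] by auto
  have fJ: "finite J" using J(3) by (rule indep_finite)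
  have ia: "indep M (J \<inter> A)" by (rule indep_subset[OF J(3)]) blast
  have ib: "indep M (J \<inter> B)" by (rule indep_subset[OF J(3)]) blast
  have iab: "indep M (J \<inter> A \<inter> B)" by (rule indep_subset[OF J(3)]) blast
  have a: "card (J \<inter> A) \<le> r A" by (rule rk_ge[OF _ ia]) blast
  have b: "card (J \<inter> B) \<le> r B" by (rule rk_ge[OF _ ib]) blast
  have c1: "card (J \<inter> A \<inter> B) \<le> r (A \<inter> B)" by (rule rk_ge[OF _ iab]) blast
  have sub: "I \<subseteq> J \<inter> A \<inter> B" using I(1) J(1) by blast
  have c2: "card I \<le> card (J \<inter> A \<inter> B)"
    by (rule card_mono) (use fJ sub in auto)
  have u: "card (J \<inter> A) + card (J \<inter> B) = card ((J \<inter> A) \<union> (J \<inter> B)) + card ((J \<inter> A) \<inter> (J \<inter> B))"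
    by (rule card_Un_Int) (use fJ in auto)
  have e1: "(J \<inter> A) \<union> (J \<inter> B) = J" using J(2) by blast
  have e2: "(J \<inter> A) \<inter> (J \<inter> B) = J \<inter> A \<inter> B" by blast
  have u2: "card (J \<inter> A) + card (J \<inter> B) = card J + card (J \<inter> A \<inter> B)"
    using u unfolding e1 e2 .
  show ?thesis using a b c1 c2 u2 I(3) J(4) by linarith
qed

lemma rk_insert: "r (insert x A) \<le> Suc (r A)"
proof -
  obtain I where I: "I \<subseteq> insert x A" "indep M I" "card I = r (insert x A)" using rk_ex by blast
  have "card (I - {x}) \<le> r A" using I indep_subset[of I "I - {x}"] by (intro rk_ge) auto
  moreover have "card I \<le> Suc (card (I - {x}))"
  proof -
    have "finite I" using I indep_finite by blast
    then have "card I \<le> card (insert x (I - {x}))" by (intro card_mono) auto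
    also have "\<dots> \<le> Suc (card (I - {x}))" using \<open>finite I\<close> by (cases "x \<in> I") (auto simp: card_insert_if)
    finally show ?thesis .
  qed
  ultimately show ?thesis using I by linarith
qed

lemma rk_un_le: "r (A \<union> B) \<le> r A + r B"
  using submod[of A B] by linarith

end



lemma Max_card_eqI:
  assumes "\<And>I. P I \<Longrightarrow> card I \<le> k" "P Iw" "card Iw = k"
  shows "Max (card ` {I. P I}) = k"
proof -
  have f: "finite (card ` {I. P I})"
    by (rule finite_subset[of _ "{..k}"]) (use assms(1) in auto)
  show ?thesis
  proof (rule Max_eqI[OF f])
    fix y assume "y \<in> card ` {I. P I}" then show "y \<le> k" using assms(1) by auto
  next
    show "k \<in> card ` {I. P I}" using assms(2,3) by blast
  qed
qed

context mat
begin

lemma cl_ground: "cl M X \<subseteq> E" unfolding cl_def by auto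

lemma cl_sub: "X \<inter> E \<subseteq> cl M X" unfolding cl_def by (auto simp: insert_absorb)

lemma cl_sub': "X \<subseteq> E \<Longrightarrow> X \<subseteq> cl M X" using cl_sub by blast

lemma in_cl: "x \<in> cl M X \<Longrightarrow> r (insert x X) = r X" unfolding cl_def by auto

lemma in_clI: "x \<in> E \<Longrightarrow> r (insert x X) \<le> r X \<Longrightarrow> x \<in> cl M X"
proof -
  assume a: "x \<in> E" "r (insert x X) \<le> r X"
  have "r X \<le> r (insert x X)" by (rule rk_mono) blast
  then show ?thesis unfolding cl_def using a by simp
qed

lemma not_cl_rk: "x \<in> E \<Longrightarrow> x \<notin> cl M X \<Longrightarrow> r (insert x X) = Suc (r X)"
proof -
  assume a: "x \<in> E" "x \<notin> cl M X"
  have "r (insert x X) \<noteq> r X" using a unfolding cl_def by auto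
  moreover have "r X \<le> r (insert x X)" by (rule rk_mono) blast
  ultimately show ?thesis using rk_insert[of x X] by linarith
qed

lemma rk_union_cl_fin: "finite B \<Longrightarrow> B \<subseteq> cl M X \<Longrightarrow> r (X \<union> B) = r X"
proof (induction B rule: finite_induct)
  case empty
  then show ?case by simp
next
  case (insert b B)
  have ih: "r (X \<union> B) = r X" using insert by blast
  have bx: "r (insert b X) = r X" using insert(4) in_cl by blast
  have eqs: "insert b X \<union> (X \<union> B) = X \<union> insert b B" by blast
  have s: "r (X \<union> insert b B) + r (insert b X \<inter> (X \<union> B)) \<le> r (insert b X) + r (X \<union> B)"
    using submod[of "insert b X" "X \<union> B"] unfolding eqs .
  have "r X \<le> r (insert b X \<inter> (X \<union> B))" by (rule rk_mono) blast
  moreover have "r X \<le> r (X \<union> insert b B)" by (rule rk_mono) blast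
  ultimately show ?case using s ih bx by linarith
qed

lemma rk_union_cl: "B \<subseteq> cl M X \<Longrightarrow> r (X \<union> B) = r X"
proof -
  assume b: "B \<subseteq> cl M X"
  then have "B \<subseteq> E" using cl_ground by blast
  then have "finite B" by (rule finite_subset[OF _ finE])
  then show ?thesis using b by (rule rk_union_cl_fin)
qed

lemma rk_le_cl: "A \<subseteq> cl M Z \<Longrightarrow> r A \<le> r Z"
proof -
  assume "A \<subseteq> cl M Z"
  then have "r (Z \<union> A) = r Z" by (rule rk_union_cl)
  moreover have "r A \<le> r (Z \<union> A)" by (rule rk_mono) blast
  ultimately show ?thesis by simp
qed

lemma rk_cl: "r (cl M X) = r X"
proof -
  have "r (cl M X) \<le> r X" by (rule rk_le_cl) blast
  moreover have "r X \<le> r (cl M X)"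
    using rk_inter[of X] rk_mono[OF cl_sub[of X]] by simp
  ultimately show ?thesis by simp
qed

lemma cl_mono: "X \<subseteq> Y \<Longrightarrow> cl M X \<subseteq> cl M Y"
proof
  fix x assume xy: "X \<subseteq> Y" and x: "x \<in> cl M X"
  have xE: "x \<in> E" using x cl_ground by blast
  have eqs: "insert x X \<union> Y = insert x Y" using xy by blast
  have s: "r (insert x Y) + r (insert x X \<inter> Y) \<le> r (insert x X) + r Y"
    using submod[of "insert x X" Y] unfolding eqs .
  have "r X \<le> r (insert x X \<inter> Y)" by (rule rk_mono) (use xy in blast)
  then have "r (insert x Y) \<le> r Y" using s in_cl[OF x] by linarith
  then show "x \<in> cl M Y" by (rule in_clI[OF xE])
qed

lemma cl_idem: "cl M (cl M X) = cl M X"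
proof
  show "cl M (cl M X) \<subseteq> cl M X"
  proof
    fix x assume x: "x \<in> cl M (cl M X)"
    have xE: "x \<in> E" using x cl_ground by blast
    have "r (insert x X) = r (insert x X \<inter> E)" by (rule rk_inter)
    also have "\<dots> \<le> r (insert x (cl M X))"
      by (rule rk_mono) (use cl_sub[of X] in auto)
    also have "\<dots> = r X" using in_cl[OF x] rk_cl by simp
    finally show "x \<in> cl M X" by (rule in_clI[OF xE])
  qed
next
  show "cl M X \<subseteq> cl M (cl M X)" using cl_sub'[OF cl_ground] .
qed

lemma cl_subset_cl: "A \<subseteq> cl M Z \<Longrightarrow> cl M A \<subseteq> cl M Z"
  using cl_mono[of A "cl M Z"] cl_idem[of Z] by simp

lemma rk_same_cl: "X1 \<subseteq> cl M X2 \<Longrightarrow> X2 \<subseteq> cl M X1 \<Longrightarrow> r (A \<union> X1) = r (A \<union> X2)"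
proof -
  assume a: "X1 \<subseteq> cl M X2" "X2 \<subseteq> cl M X1"
  have "X2 \<subseteq> cl M (A \<union> X1)" using a(2) cl_mono[of X1 "A \<union> X1"] by blast
  then have "r ((A \<union> X1) \<union> X2) = r (A \<union> X1)" by (rule rk_union_cl)
  moreover have "X1 \<subseteq> cl M (A \<union> X2)" using a(1) cl_mono[of X2 "A \<union> X2"] by blast
  then have "r ((A \<union> X2) \<union> X1) = r (A \<union> X2)" by (rule rk_union_cl)
  moreover have "(A \<union> X1) \<union> X2 = (A \<union> X2) \<union> X1" by blast
  ultimately show ?thesis by simp
qed

lemma indep_contr_restr:
  "indep (restrict (contract M X) T) I \<longleftrightarrow> I \<subseteq> (E - X) \<inter> T \<and> r (I \<union> X) = card I + r X"
  unfolding restrict_def contract_def by auto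

lemma ground_contr_restr: "ground (restrict (contract M X) T) = (E - X) \<inter> T"
  unfolding restrict_def contract_def by auto

lemma rk_contr:
  assumes X: "X \<subseteq> E" and A: "A \<subseteq> T" and T: "T \<subseteq> E - X"
  shows "rk (restrict (contract M X) T) A = r (A \<union> X) - r X"
proof -
  let ?S = "restrict (contract M X) T"
  obtain JX where JX: "JX \<subseteq> X" "indep M JX" "card JX = r X" using rk_ex by blast
  have JXs: "JX \<subseteq> A \<union> X" using JX by blast
  obtain J where J: "JX \<subseteq> J" "J \<subseteq> A \<union> X" "indep M J" "card J = r (A \<union> X)"
    using extend[OF JX(2) JXs] by auto
  have fJ: "finite J" using J(3) by (rule indep_finite)
  have iJX: "indep M (J \<inter> X)" by (rule indep_subset[OF J(3)]) blast
  have c1: "card (J \<inter> X) \<le> r X" by (rule rk_ge[OF _ iJX]) blast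
  have c2: "card JX \<le> card (J \<inter> X)" by (rule card_mono) (use fJ J(1) JX(1) in auto)
  have cJX: "card (J \<inter> X) = r X" using c1 c2 JX(3) by linarith
  let ?I0 = "J - X"
  have cI0: "card ?I0 = r (A \<union> X) - r X"
  proof -
    have "J = (J - X) \<union> (J \<inter> X)" by blast
    then have "card J = card ((J - X) \<union> (J \<inter> X))" by simp
    also have "\<dots> = card (J - X) + card (J \<inter> X)" by (rule card_Un_disjoint) (use fJ in auto)
    finally have "card J = card (J - X) + card (J \<inter> X)" .
    then show ?thesis using cJX J(4) by linarith
  qed
  have I0A: "?I0 \<subseteq> A" using J(2) by blast
  have rI0: "r (?I0 \<union> X) = r (A \<union> X)"
  proof -
    have "r (?I0 \<union> X) \<le> r (A \<union> X)" by (rule rk_mono) (use I0A in blast)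
    moreover have "card J \<le> r (?I0 \<union> X)" by (rule rk_ge[OF _ J(3)]) blast
    ultimately show ?thesis using J(4) by linarith
  qed
  have rXA: "r X \<le> r (A \<union> X)" by (rule rk_mono) blast
  show ?thesis
    unfolding rk_def[of ?S]
  proof (rule Max_card_eqI[where Iw = "J - X"])
    fix I assume "I \<subseteq> A \<and> indep ?S I"
    then have I: "I \<subseteq> A" "r (I \<union> X) = card I + r X" using indep_contr_restr by auto
    have "r (I \<union> X) \<le> r (A \<union> X)" by (rule rk_mono) (use I(1) in blast)
    then show "card I \<le> r (A \<union> X) - r X" using I(2) by linarith
  next
    show "?I0 \<subseteq> A \<and> indep ?S ?I0"
      unfolding indep_contr_restr using I0A A T rI0 cI0 rXA by auto
  next
    show "card ?I0 = r (A \<union> X) - r X" by (rule cI0)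
  qed
qed

lemma basis_card: "basis M B \<Longrightarrow> card B = r E"
proof -
  assume b: "basis M B"
  have iB: "indep M B" using b unfolding basis_def by blast
  have le: "card B \<le> r E" by (rule rk_ge[OF indep_ground[OF iB] iB])
  show ?thesis
  proof (rule ccontr)
    assume "card B \<noteq> r E"
    then have lt: "card B < r E" using le by linarith
    obtain K where K: "K \<subseteq> E" "indep M K" "card K = r E" using rk_ex by blast
    obtain x where x: "x \<in> K - B" "indep M (insert x B)" using augment[OF iB K(2)] lt K(3) by auto
    have "insert x B = B" using b x(2) unfolding basis_def by blast
    then show False using x(1) by blast
  qed
qed

lemma basis_of_card: "indep M B \<Longrightarrow> card B = r E \<Longrightarrow> basis M B"
  unfolding basis_def
proof (intro conjI allI impI)
  fix I assume a: "indep M B" "card B = r E" and i: "indep M I \<and> B \<subseteq> I"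
  have "card I \<le> r E" using rk_ge[OF indep_ground] i by blast
  moreover have "finite I" using i indep_finite by blast
  ultimately show "I = B" using i a card_seteq[of I B] by simp
qed

lemma ex_basis_sub: "(\<exists>B. basis M B \<and> B \<subseteq> A) \<longleftrightarrow> r A = r E"
proof
  assume "\<exists>B. basis M B \<and> B \<subseteq> A"
  then obtain B where B: "basis M B" "B \<subseteq> A" by blast
  have "card B \<le> r A" using B rk_ge unfolding basis_def by blast
  then show "r A = r E" using basis_card[OF B(1)] rk_le_E[of A] by linarith
next
  assume a: "r A = r E"
  obtain I where "I \<subseteq> A" "indep M I" "card I = r A" using rk_ex by blast
  then show "\<exists>B. basis M B \<and> B \<subseteq> A" using basis_of_card[of I] a by auto
qed

lemma dual_indep: "indep (dual M) I \<longleftrightarrow> I \<subseteq> E \<and> r (E - I) = r E"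
proof -
  have "(\<exists>B. basis M B \<and> I \<inter> B = {}) \<longleftrightarrow> (\<exists>B. basis M B \<and> B \<subseteq> E - I)"
    using indep_ground unfolding basis_def by blast
  then show ?thesis unfolding dual_def using ex_basis_sub[of "E - I"] by auto
qed

lemma cocircuit_iff: "cocircuit M D \<longleftrightarrow> D \<subseteq> E \<and> r (E - D) \<noteq> r E \<and> (\<forall>x\<in>D. r (insert x (E - D)) = r E)"
proof -
  have g: "ground (dual M) = E" unfolding dual_def by simp
  have e: "\<And>x. x \<in> D \<Longrightarrow> D \<subseteq> E \<Longrightarrow> E - (D - {x}) = insert x (E - D)" by blast
  show ?thesis
    unfolding cocircuit_def circuit_def g dual_indep using e by auto
qed

end



locale isom =
  fixes S :: "'a matroid" and S' :: "'c matroid" and f :: "'a \<Rightarrow> 'c"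
  assumes bij: "bij_betw f (ground S) (ground S')"
    and ind: "\<And>I. I \<subseteq> ground S \<Longrightarrow> indep S I \<longleftrightarrow> indep S' (f ` I)"
begin

lemma inj: "inj_on f (ground S)" using bij_betw_imp_inj_on[OF bij] .
lemma img: "f ` ground S = ground S'" using bij_betw_imp_surj_on[OF bij] .

lemma rk_iso: assumes A: "A \<subseteq> ground S" shows "rk S' (f ` A) = rk S A"
proof -
  have e: "{I. I \<subseteq> f ` A \<and> indep S' I} = (\<lambda>J. f ` J) ` {J. J \<subseteq> A \<and> indep S J}"
  proof
    show "{I. I \<subseteq> f ` A \<and> indep S' I} \<subseteq> (\<lambda>J. f ` J) ` {J. J \<subseteq> A \<and> indep S J}"
    proof
      fix I assume I: "I \<in> {I. I \<subseteq> f ` A \<and> indep S' I}"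
      let ?J = "{a \<in> A. f a \<in> I}"
      have fJ: "f ` ?J = I" using I by blast
      have "?J \<subseteq> ground S" using A by blast
      then have "indep S ?J" using ind[of ?J] fJ I by simp
      then show "I \<in> (\<lambda>J. f ` J) ` {J. J \<subseteq> A \<and> indep S J}" using fJ by blast
    qed
  next
    show "(\<lambda>J. f ` J) ` {J. J \<subseteq> A \<and> indep S J} \<subseteq> {I. I \<subseteq> f ` A \<and> indep S' I}"
    proof
      fix I assume "I \<in> (\<lambda>J. f ` J) ` {J. J \<subseteq> A \<and> indep S J}"
      then obtain J where J: "J \<subseteq> A" "indep S J" "I = f ` J" by blast
      have "indep S' I" using ind[of J] J A by blast
      then show "I \<in> {I. I \<subseteq> f ` A \<and> indep S' I}" using J by blast
    qed
  qed
  have c: "card ` {I. I \<subseteq> f ` A \<and> indep S' I} = card ` {J. J \<subseteq> A \<and> indep S J}"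
  proof -
    have "card ` {I. I \<subseteq> f ` A \<and> indep S' I} = (\<lambda>J. card (f ` J)) ` {J. J \<subseteq> A \<and> indep S J}"
      unfolding e by (simp add: image_image)
    also have "\<dots> = card ` {J. J \<subseteq> A \<and> indep S J}"
    proof (rule image_cong[OF refl])
      fix J assume "J \<in> {J. J \<subseteq> A \<and> indep S J}"
      then have "J \<subseteq> ground S" using A by blast
      then have "inj_on f J" by (rule inj_on_subset[OF inj])
      then show "card (f ` J) = card J" by (rule card_image)
    qed
    finally show ?thesis .
  qed
  show ?thesis using c by (simp only: rk_def)
qed

lemma tsep_back: assumes t: "tutte_sep S' k X'" shows "tutte_sep S k (ground S \<inter> f -` X')"
proof -
  let ?X = "ground S \<inter> f -` X'"
  have X'g: "X' \<subseteq> ground S'" using t unfolding tutte_sep_def by blast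
  have fX: "f ` ?X = X'"
  proof
    show "f ` ?X \<subseteq> X'" by blast
    show "X' \<subseteq> f ` ?X"
    proof
      fix b assume b: "b \<in> X'"
      then obtain a where a: "a \<in> ground S" "b = f a" using img X'g by blast
      then show "b \<in> f ` ?X" using b by blast
    qed
  qed
  have fY: "f ` (ground S - ?X) = ground S' - X'"
  proof
    show "f ` (ground S - ?X) \<subseteq> ground S' - X'" using img by blast
    show "ground S' - X' \<subseteq> f ` (ground S - ?X)"
    proof
      fix b assume b: "b \<in> ground S' - X'"
      then obtain a where a: "a \<in> ground S" "b = f a" using img by blast
      then show "b \<in> f ` (ground S - ?X)" using b by blast
    qed
  qed
  have i1: "inj_on f ?X" by (rule inj_on_subset[OF inj]) blast
  have i2: "inj_on f (ground S - ?X)" by (rule inj_on_subset[OF inj]) blast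
  have cX: "card ?X = card X'" using card_image[OF i1] fX by simp
  have cY: "card (ground S - ?X) = card (ground S' - X')" using card_image[OF i2] fY by simp
  have rX: "rk S ?X = rk S' X'" using rk_iso[of ?X] fX by simp
  have rY: "rk S (ground S - ?X) = rk S' (ground S' - X')" using rk_iso[of "ground S - ?X"] fY by simp
  have rG: "rk S (ground S) = rk S' (ground S')" using rk_iso[of "ground S"] img by simp
  show ?thesis using t unfolding tutte_sep_def using cX cY rX rY rG by auto
qed

lemma tc_iso: "three_connected S \<Longrightarrow> three_connected S'"
  unfolding three_connected_def using tsep_back by blast

lemma minor_iso:
  assumes "has_minor S N" shows "has_minor S' N"
proof -
  obtain M' g where m: "is_minor M' S" and gb: "bij_betw g (ground N) (ground M')"
    and gi: "\<forall>I. I \<subseteq> ground N \<longrightarrow> (indep N I \<longleftrightarrow> indep M' (g ` I))"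
    using assms unfolding has_minor_def iso_def by blast
  obtain C D where CD: "C \<subseteq> ground S" "D \<subseteq> ground S" "C \<inter> D = {}" "M' = delete (contract S C) D"
    using m unfolding is_minor_def by blast
  let ?M2 = "delete (contract S' (f ` C)) (f ` D)"
  have gM': "ground M' = ground S - C - D" using CD(4) unfolding delete_def restrict_def contract_def by auto
  have gM2: "ground ?M2 = ground S' - f ` C - f ` D" unfolding delete_def restrict_def contract_def by auto
  have fM: "f ` (ground S - C - D) = ground S' - f ` C - f ` D"
  proof
    show "f ` (ground S - C - D) \<subseteq> ground S' - f ` C - f ` D"
    proof
      fix b assume "b \<in> f ` (ground S - C - D)"
      then obtain a where a: "a \<in> ground S" "a \<notin> C" "a \<notin> D" "b = f a" by blast
      have "b \<in> ground S'" using a img by blast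
      moreover have "b \<notin> f ` C"
      proof
        assume "b \<in> f ` C" then obtain c where "c \<in> C" "b = f c" by blast
        then show False using a inj CD(1) unfolding inj_on_def by blast
      qed
      moreover have "b \<notin> f ` D"
      proof
        assume "b \<in> f ` D" then obtain c where "c \<in> D" "b = f c" by blast
        then show False using a inj CD(2) unfolding inj_on_def by blast
      qed
      ultimately show "b \<in> ground S' - f ` C - f ` D" by blast
    qed
    show "ground S' - f ` C - f ` D \<subseteq> f ` (ground S - C - D)"
    proof
      fix b assume b: "b \<in> ground S' - f ` C - f ` D"
      then obtain a where a: "a \<in> ground S" "b = f a" using img by blast
      then show "b \<in> f ` (ground S - C - D)" using b by blast
    qed
  qed
  have injM: "inj_on f (ground S - C - D)" by (rule inj_on_subset[OF inj]) blast
  have indM': "\<And>I. indep M' I \<longleftrightarrow> I \<subseteq> ground S - C - D \<and> rk S (I \<union> C) = card I + rk S C"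
    using CD(4) unfolding delete_def restrict_def contract_def by auto
  have indM2: "\<And>I. indep ?M2 I \<longleftrightarrow> I \<subseteq> ground S' - f ` C - f ` D \<and> rk S' (I \<union> f ` C) = card I + rk S' (f ` C)"
    unfolding delete_def restrict_def contract_def by auto
  have key: "\<And>I. I \<subseteq> ground S - C - D \<Longrightarrow> indep M' I \<longleftrightarrow> indep ?M2 (f ` I)"
  proof -
    fix I assume I: "I \<subseteq> ground S - C - D"
    have "f ` I \<subseteq> ground S' - f ` C - f ` D" using I fM by blast
    moreover have "rk S' (f ` I \<union> f ` C) = rk S (I \<union> C)"
    proof -
      have "I \<union> C \<subseteq> ground S" using I CD(1) by blast
      then show ?thesis using rk_iso[of "I \<union> C"] by (simp add: image_Un)
    qed
    moreover have "rk S' (f ` C) = rk S C" using rk_iso[OF CD(1)] .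
    moreover have "card (f ` I) = card I" using inj_on_subset[OF injM I] by (rule card_image)
    ultimately show "indep M' I \<longleftrightarrow> indep ?M2 (f ` I)" unfolding indM' indM2 using I by auto
  qed
  have "is_minor ?M2 S'"
    unfolding is_minor_def
  proof (intro exI conjI)
    show "f ` C \<subseteq> ground S'" using CD(1) img by blast
    show "f ` D \<subseteq> ground S'" using CD(2) img by blast
    show "f ` C \<inter> f ` D = {}"
    proof (rule ccontr)
      assume "f ` C \<inter> f ` D \<noteq> {}"
      then obtain c d where "c \<in> C" "d \<in> D" "f c = f d" by blast
      then show False using CD(1,2,3) inj unfolding inj_on_def by blast
    qed
  qed (rule refl)
  moreover have "iso N ?M2"
    unfolding iso_def
  proof (intro exI conjI allI impI)
    show "bij_betw (f \<circ> g) (ground N) (ground ?M2)"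
    proof (rule bij_betw_trans[OF gb])
      show "bij_betw f (ground M') (ground ?M2)" unfolding gM' gM2 bij_betw_def using injM fM by blast
    qed
  next
    fix I assume I: "I \<subseteq> ground N"
    have gI: "g ` I \<subseteq> ground M'" using gb I unfolding bij_betw_def by blast
    show "indep N I \<longleftrightarrow> indep ?M2 ((f \<circ> g) ` I)"
      using gi I key[of "g ` I"] gI gM' by (simp add: image_comp)
  qed
  ultimately show ?thesis unfolding has_minor_def by blast
qed

end



context mat
begin

lemma indep_contract: "indep (contract M X) I \<longleftrightarrow> I \<subseteq> E - X \<and> r (I \<union> X) = card I + r X"
  unfolding contract_def by simp

lemma ground_contract: "ground (contract M X) = E - X"
  unfolding contract_def by simp

lemma loop_contract: "loop (contract M X) e \<longleftrightarrow> e \<in> E - X \<and> r (insert e X) \<noteq> Suc (r X)"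
  unfolding loop_def indep_contract ground_contract by auto

lemma parallel_contract: "parallel (contract M X) a b \<longleftrightarrow>
  a \<in> E - X \<and> b \<in> E - X \<and> a \<noteq> b \<and> r (insert a X) = Suc (r X) \<and> r (insert b X) = Suc (r X)
  \<and> r (insert a (insert b X)) \<noteq> Suc (Suc (r X))"
  unfolding parallel_def indep_contract ground_contract by auto

lemma TL:
  assumes X1: "X1 \<subseteq> E" and X2: "X2 \<subseteq> E"
    and U1: "U1 \<subseteq> E - X1" and injp: "inj_on ph U1" and U2: "ph ` U1 \<subseteq> E - X2"
    and cov: "\<And>e. e \<in> E - X2 \<Longrightarrow> e \<notin> cl M X2 \<Longrightarrow> e \<in> ph ` U1"
    and idt: "\<And>A. A \<subseteq> U1 \<Longrightarrow> r (A \<union> X1) + r X2 = r (ph ` A \<union> X2) + r X1"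
    and si: "simplification (contract M X1) S" and tc: "three_connected S" and mn: "has_minor S N"
    and TU: "ground S \<subseteq> U1"
  shows "si_contract_good M N X2"
proof -
  let ?M1 = "contract M X1" and ?M2 = "contract M X2"
  obtain T where T: "T \<subseteq> E - X1" "S = restrict ?M1 T" "\<forall>t\<in>T. \<not> loop ?M1 t"
    "\<forall>x\<in>E - X1. \<not> loop ?M1 x \<longrightarrow> (\<exists>!t. t \<in> T \<and> (t = x \<or> parallel ?M1 x t))"
    using si unfolding simplification_def ground_contract by blast
  have gS: "ground S = T" using T(1,2) ground_contr_restr by auto
  have TU1: "T \<subseteq> U1" using TU gS by simp
  have nl: "\<And>a. a \<in> U1 \<Longrightarrow> loop ?M1 a \<longleftrightarrow> loop ?M2 (ph a)"
  proof -
    fix a assume a: "a \<in> U1"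
    have "r ({a} \<union> X1) + r X2 = r (ph ` {a} \<union> X2) + r X1" using idt[of "{a}"] a by blast
    then have "r (insert a X1) + r X2 = r (insert (ph a) X2) + r X1" by simp
    then show "loop ?M1 a \<longleftrightarrow> loop ?M2 (ph a)" unfolding loop_contract using a U1 U2 by auto
  qed
  have par: "\<And>a b. a \<in> U1 \<Longrightarrow> b \<in> U1 \<Longrightarrow> parallel ?M1 a b \<longleftrightarrow> parallel ?M2 (ph a) (ph b)"
  proof -
    fix a b assume a: "a \<in> U1" and b: "b \<in> U1"
    have ia: "r (insert a X1) + r X2 = r (insert (ph a) X2) + r X1" using idt[of "{a}"] a by simp
    have ib: "r (insert b X1) + r X2 = r (insert (ph b) X2) + r X1" using idt[of "{b}"] b by simp
    have iab: "r (insert a (insert b X1)) + r X2 = r (insert (ph a) (insert (ph b) X2)) + r X1"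
      using idt[of "{a,b}"] a b by simp
    have ne: "a \<noteq> b \<longleftrightarrow> ph a \<noteq> ph b" using injp a b unfolding inj_on_def by blast
    show "parallel ?M1 a b \<longleftrightarrow> parallel ?M2 (ph a) (ph b)"
      unfolding parallel_contract using a b U1 U2 ia ib iab ne by auto
  qed
  let ?T' = "ph ` T"
  let ?S' = "restrict ?M2 ?T'"
  have T'sub: "?T' \<subseteq> E - X2" using TU1 U2 by blast
  have simp2: "simplification ?M2 ?S'"
    unfolding simplification_def ground_contract
  proof (intro exI conjI ballI impI)
    show "?T' \<subseteq> E - X2" by (rule T'sub)
    show "?S' = restrict ?M2 ?T'" ..
  next
    fix t' assume "t' \<in> ?T'"
    then obtain t where t: "t \<in> T" "t' = ph t" by blast
    then show "\<not> loop ?M2 t'" using nl[of t] TU1 T(3) by blast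
  next
    fix e assume e: "e \<in> E - X2" and enl: "\<not> loop ?M2 e"
    have "e \<notin> cl M X2"
    proof
      assume "e \<in> cl M X2"
      then have "r (insert e X2) = r X2" by (rule in_cl)
      then show False using enl e unfolding loop_contract by simp
    qed
    then obtain e0 where e0: "e0 \<in> U1" "e = ph e0" using cov e by blast
    have e0E: "e0 \<in> E - X1" using e0 U1 by blast
    have e0nl: "\<not> loop ?M1 e0" using nl[OF e0(1)] enl e0 by simp
    obtain t where t: "t \<in> T" "t = e0 \<or> parallel ?M1 e0 t"
      and tu: "\<And>t2. t2 \<in> T \<and> (t2 = e0 \<or> parallel ?M1 e0 t2) \<Longrightarrow> t2 = t"
      using T(4) e0E e0nl by metis
    have bk: "\<And>s. s \<in> T \<Longrightarrow> (ph s = e \<or> parallel ?M2 e (ph s)) \<Longrightarrow> (s = e0 \<or> parallel ?M1 e0 s)"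
    proof -
      fix s assume s: "s \<in> T" "ph s = e \<or> parallel ?M2 e (ph s)"
      have sU: "s \<in> U1" using s TU1 by blast
      show "s = e0 \<or> parallel ?M1 e0 s"
      proof (cases "ph s = e")
        case True
        then show ?thesis using injp sU e0 unfolding inj_on_def by blast
      next
        case False
        then have "parallel ?M2 (ph e0) (ph s)" using s e0 by simp
        then show ?thesis using par[OF e0(1) sU] by simp
      qed
    qed
    show "\<exists>!t'. t' \<in> ?T' \<and> (t' = e \<or> parallel ?M2 e t')"
    proof (rule ex1I[where a = "ph t"])
      show "ph t \<in> ?T' \<and> (ph t = e \<or> parallel ?M2 e (ph t))"
        using t e0 par[OF e0(1)] TU1 by blast
    next
      fix t' assume t': "t' \<in> ?T' \<and> (t' = e \<or> parallel ?M2 e t')"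
      then obtain s where s: "s \<in> T" "t' = ph s" by blast
      then have "s = t" using tu bk t' by blast
      then show "t' = ph t" using s by simp
    qed
  qed
  have gS': "ground ?S' = ?T'" using T'sub ground_contr_restr by auto
  interpret I: isom S ?S' ph
  proof
    show "bij_betw ph (ground S) (ground ?S')"
      unfolding gS gS' bij_betw_def using inj_on_subset[OF injp TU1] by blast
  next
    fix I assume I: "I \<subseteq> ground S"
    have IU: "I \<subseteq> U1" using I gS TU1 by blast
    have c: "card (ph ` I) = card I" using card_image inj_on_subset[OF injp IU] by blast
    have "indep S I \<longleftrightarrow> I \<subseteq> (E - X1) \<inter> T \<and> r (I \<union> X1) = card I + r X1"
      using T(2) indep_contr_restr by simp
    moreover have "indep ?S' (ph ` I) \<longleftrightarrow> ph ` I \<subseteq> (E - X2) \<inter> ?T' \<and> r (ph ` I \<union> X2) = card (ph ` I) + r X2"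
      using indep_contr_restr by simp
    moreover have "I \<subseteq> (E - X1) \<inter> T" using I gS T(1) by blast
    moreover have "ph ` I \<subseteq> (E - X2) \<inter> ?T'" using I gS T'sub by blast
    ultimately show "indep S I \<longleftrightarrow> indep ?S' (ph ` I)" using idt[OF IU] c by auto
  qed
  show ?thesis unfolding si_contract_good_def
    using simp2 I.tc_iso[OF tc] I.minor_iso[OF mn] by blast
qed

end



locale tcm = mat +
  assumes smp: "simple M" and tc3: "three_connected M"
begin

lemma rk1: "x \<in> E \<Longrightarrow> r {x} = 1"
proof -
  assume "x \<in> E"
  then have "indep M {x}" using smp unfolding simple_def by blast
  then show ?thesis using rk_indep by simp
qed

lemma rk2: "x \<in> E \<Longrightarrow> z \<in> E \<Longrightarrow> x \<noteq> z \<Longrightarrow> r {x, z} = 2"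
proof -
  assume "x \<in> E" "z \<in> E" "x \<noteq> z"
  then have "indep M {x, z}" using smp unfolding simple_def by blast
  then show ?thesis using rk_indep \<open>x \<noteq> z\<close> by simp
qed

lemma card_rk_le: "X \<subseteq> E \<Longrightarrow> r X \<le> card X"
  using rk_le_card finite_subset[OF _ finE] by blast

lemma no1sep: "X \<subseteq> E \<Longrightarrow> card X \<ge> 1 \<Longrightarrow> card (E - X) \<ge> 1 \<Longrightarrow> r E + 1 \<le> r X + r (E - X)"
  using tc3 unfolding three_connected_def tutte_sep_def by force

lemma no2sep: "X \<subseteq> E \<Longrightarrow> card X \<ge> 2 \<Longrightarrow> card (E - X) \<ge> 2 \<Longrightarrow> r E + 2 \<le> r X + r (E - X)"
  using tc3 unfolding three_connected_def tutte_sep_def by force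

lemma sepQ:
  assumes Q: "Q \<subseteq> E" "card Q \<ge> 2" and X: "E - Q \<noteq> {}"
  shows "r E + 1 \<le> r (E - Q) + r Q" and "card (E - Q) \<ge> 2 \<Longrightarrow> r E + 2 \<le> r (E - Q) + r Q"
proof -
  have e: "E - (E - Q) = Q" using Q by blast
  have f: "finite (E - Q)" using finE by blast
  have c1: "card (E - Q) \<ge> 1" using X f by (simp add: Suc_leI card_gt_0_iff)
  show "r E + 1 \<le> r (E - Q) + r Q" using no1sep[of "E - Q"] e Q c1 by simp
  show "card (E - Q) \<ge> 2 \<Longrightarrow> r E + 2 \<le> r (E - Q) + r Q" using no2sep[of "E - Q"] e Q by simp
qed

lemma lemK:
  assumes Q: "Q \<subseteq> E" "card Q \<ge> 2" "r Q < r E" "r (E - Q) \<le> 2"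
  shows False
proof (cases "E - Q = {}")
  case True
  then have "Q = E" using Q by blast
  then show False using Q by simp
next
  case False
  note s = sepQ[OF Q(1,2) False]
  have f: "finite (E - Q)" using finE by blast
  show False
  proof (cases "card (E - Q) \<ge> 2")
    case True
    then show False using s(2) Q by linarith
  next
    case False
    then have "card (E - Q) \<le> 1" by simp
    then have "r (E - Q) \<le> 1" using card_rk_le[of "E - Q"] by simp
    then show False using s(1) Q by linarith
  qed
qed

lemma exch:
  assumes Z: "Z \<subseteq> E" and t: "t \<in> E" "t \<notin> cl M Z" and e: "e \<in> E" "e \<notin> cl M Z"
    and et: "e \<in> cl M (insert t Z)"
  shows "t \<in> cl M (insert e Z)"
proof (rule in_clI[OF t(1)])
  have "r (insert e (insert t Z)) = r (insert t Z)" using in_cl[OF et] .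
  also have "\<dots> = Suc (r Z)" using not_cl_rk[OF t] .
  also have "\<dots> = r (insert e Z)" using not_cl_rk[OF e] by simp
  finally show "r (insert t (insert e Z)) \<le> r (insert e Z)" by (simp add: insert_commute)
qed

lemma cl_pair_sub: "a \<in> cl M Z \<Longrightarrow> b \<in> cl M Z \<Longrightarrow> c \<in> cl M Z \<Longrightarrow> cl M {a, b, c} \<subseteq> cl M Z"
  by (rule cl_subset_cl) blast

lemma cl_pair_sub2: "a \<in> cl M Z \<Longrightarrow> b \<in> cl M Z \<Longrightarrow> cl M {a, b} \<subseteq> cl M Z"
  by (rule cl_subset_cl) blast

end




locale gset = tcm +
  fixes y w :: 'a and Ty Twy :: "'a set"
  assumes yE: "y \<in> E" and wE: "w \<in> E" and wy: "w \<noteq> y"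
    and Twy: "Twy \<subseteq> E - {w, y}" and Twy_nl: "\<And>t. t \<in> Twy \<Longrightarrow> t \<notin> cl M {w, y}"
    and Twy_cov: "\<And>e. e \<in> E \<Longrightarrow> e \<notin> cl M {w, y} \<Longrightarrow> \<exists>t\<in>Twy. e \<in> cl M {t, w, y}"
    and Swy3: "three_connected (restrict (contract M {w, y}) Twy)"
    and Ty: "Ty \<subseteq> E - {y}" and wTy: "w \<in> Ty" and TwyTy: "Twy \<subseteq> Ty"
    and Ty_pw: "\<And>a b. a \<in> Ty \<Longrightarrow> b \<in> Ty \<Longrightarrow> a \<noteq> b \<Longrightarrow> r {a, b, y} = 3"
    and Ty_cov: "\<And>e. e \<in> E \<Longrightarrow> e \<noteq> y \<Longrightarrow> \<exists>t\<in>Ty. e \<in> cl M {t, y}"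
begin

abbreviation "Swy \<equiv> restrict (contract M {w, y}) Twy"

lemma wyE: "{w, y} \<subseteq> E" using wE yE by blast
lemma rwy: "r {w, y} = 2" using rk2[OF wE yE wy] .

lemma gSwy: "ground Swy = Twy" using ground_contr_restr Twy by auto

lemma rSwy: "A \<subseteq> Twy \<Longrightarrow> rk Swy A = r (A \<union> {w, y}) - 2"
  using rk_contr[OF wyE _ Twy] rwy by simp

lemma span_wy: "r (Twy \<union> {w, y}) = r E"
proof -
  have "E \<subseteq> cl M (Twy \<union> {w, y})"
  proof
    fix e assume e: "e \<in> E"
    show "e \<in> cl M (Twy \<union> {w, y})"
    proof (cases "e \<in> cl M {w, y}")
      case True
      then show ?thesis using cl_mono[of "{w,y}" "Twy \<union> {w, y}"] by blast
    next
      case False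
      then obtain t where t: "t \<in> Twy" "e \<in> cl M {t, w, y}" using Twy_cov e by blast
      then show ?thesis using cl_mono[of "{t,w,y}" "Twy \<union> {w, y}"] by blast
    qed
  qed
  then have "r E \<le> r (Twy \<union> {w, y})" by (rule rk_le_cl)
  then show ?thesis using rk_le_E[of "Twy \<union> {w, y}"] by simp
qed

lemma rSwy_tot: "rk Swy Twy = r E - 2" using rSwy[of Twy] span_wy by simp

lemma fTy: "finite Ty" using Ty finE finite_subset by blast
lemma fTwy: "finite Twy" using Twy finE finite_subset by blast
lemma TyE: "Ty \<subseteq> E" using Ty by blast

lemma two_elems: assumes "finite A" "2 \<le> card A" "w' \<in> A" shows "\<exists>a\<in>A. a \<noteq> w'"
proof (rule ccontr)
  assume "\<not> (\<exists>a\<in>A. a \<noteq> w')"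
  then have "A \<subseteq> {w'}" by blast
  then have "card A \<le> 1" using card_mono[of "{w'}" A] by simp
  then show False using assms by simp
qed

lemma two_elems': assumes "finite A" "2 \<le> card A" shows "\<exists>a\<in>A. \<exists>b\<in>A. a \<noteq> b"
proof -
  obtain a where "a \<in> A" using assms by fastforce
  then show ?thesis using two_elems[OF assms \<open>a \<in> A\<close>] by blast
qed

lemma vert: assumes A: "A \<subseteq> Ty" "2 \<le> card A" shows "3 \<le> r (insert y A)"
proof -
  have "finite A" using A fTy finite_subset by blast
  then obtain a b where ab: "a \<in> A" "b \<in> A" "a \<noteq> b" using two_elems' A by blast
  have "r {a, b, y} = 3" using Ty_pw ab A by blast
  moreover have "r {a, b, y} \<le> r (insert y A)" by (rule rk_mono) (use ab in blast)
  ultimately show ?thesis by simp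
qed

lemma cover: assumes A: "A \<subseteq> Ty" and e: "e \<in> E"
  shows "e \<in> cl M (insert y A) \<or> e \<in> cl M (insert y (Ty - A))"
proof (cases "e = y")
  case True
  then show ?thesis using cl_sub'[of "insert y A"] A TyE yE by blast
next
  case False
  then obtain t where t: "t \<in> Ty" "e \<in> cl M {t, y}" using Ty_cov e by blast
  show ?thesis
  proof (cases "t \<in> A")
    case True
    then show ?thesis using t cl_mono[of "{t, y}" "insert y A"] by blast
  next
    case False
    then show ?thesis using t cl_mono[of "{t, y}" "insert y (Ty - A)"] by blast
  qed
qed

definition sepok :: "'a set \<Rightarrow> bool" where
  "sepok A \<longleftrightarrow> A \<subseteq> Ty \<and> 2 \<le> card A \<and> 2 \<le> card (Ty - A) \<and>
     r (insert y A) + r (insert y (Ty - A)) \<le> r E + 2"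

lemma sepok_sym: "sepok A \<Longrightarrow> sepok (Ty - A)"
proof -
  assume s: "sepok A"
  have "Ty - (Ty - A) = A" using s unfolding sepok_def by blast
  then show ?thesis using s unfolding sepok_def by auto
qed

lemma sep_bounds: assumes s: "sepok A"
  shows "3 \<le> r (insert y A)" "3 \<le> r (insert y (Ty - A))"
    "r (insert y A) + 1 \<le> r E" "r (insert y (Ty - A)) + 1 \<le> r E"
proof -
  show a: "3 \<le> r (insert y A)" using vert s unfolding sepok_def by blast
  show b: "3 \<le> r (insert y (Ty - A))" using vert[of "Ty - A"] s unfolding sepok_def by blast
  show "r (insert y A) + 1 \<le> r E" using a b s unfolding sepok_def by linarith
  show "r (insert y (Ty - A)) + 1 \<le> r E" using a b s unfolding sepok_def by linarith
qed

lemma notcl_wy: assumes a: "a \<in> Ty" "a \<noteq> w" shows "a \<notin> cl M {w, y}"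
proof
  assume "a \<in> cl M {w, y}"
  then have "r (insert a {w, y}) = r {w, y}" by (rule in_cl)
  moreover have "r {a, w, y} = 3" using Ty_pw[OF a(1) wTy a(2)] .
  ultimately show False using rwy by simp
qed

lemma NoW: assumes s: "sepok A" and wA: "w \<in> A"
  shows "w \<notin> cl M (insert y (Ty - A))"
proof
  assume wB: "w \<in> cl M (insert y (Ty - A))"
  let ?FA = "cl M (insert y A)" let ?FB = "cl M (insert y (Ty - A))"
  let ?X = "Twy \<inter> ?FA" let ?Y = "Twy - ?FA"
  have AT: "A \<subseteq> Ty" using s unfolding sepok_def by blast
  have AE: "insert y A \<subseteq> E" using AT TyE yE by blast
  have BE: "insert y (Ty - A) \<subseteq> E" using TyE yE by blast
  have sA: "insert y A \<subseteq> ?FA" using cl_sub'[OF AE] .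
  have sB: "insert y (Ty - A) \<subseteq> ?FB" using cl_sub'[OF BE] .
  note bd = sep_bounds[OF s]
  have XFA: "?X \<union> {w, y} \<subseteq> ?FA" using sA wA by blast
  have rX: "r (?X \<union> {w, y}) \<le> r (insert y A)" using rk_le_cl[OF XFA] .
  have YB: "?Y \<subseteq> Ty - A" using TwyTy sA by blast
  have YFB: "?Y \<union> {w, y} \<subseteq> ?FB" using YB sB wB by blast
  have rY: "r (?Y \<union> {w, y}) \<le> r (insert y (Ty - A))" using rk_le_cl[OF YFB] .
  have fA: "finite A" using AT fTy finite_subset by blast
  obtain a where a: "a \<in> A" "a \<noteq> w" using two_elems[OF fA _ wA] s unfolding sepok_def by blast
  have aE: "a \<in> E" using a AT TyE by blast
  have anc: "a \<notin> cl M {w, y}" using notcl_wy a AT by blast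
  obtain t where t: "t \<in> Twy" "a \<in> cl M {t, w, y}" using Twy_cov[OF aE anc] by blast
  have tE: "t \<in> E" using t Twy by blast
  have "t \<in> cl M (insert a {w, y})"
    by (rule exch[OF wyE tE Twy_nl[OF t(1)] aE anc]) (use t in simp)
  moreover have "cl M {a, w, y} \<subseteq> ?FA" by (rule cl_pair_sub) (use sA a wA in blast)+
  ultimately have tX: "t \<in> ?X" using t by auto
  have Yne: "?Y \<noteq> {}"
  proof
    assume Y0: "?Y = {}"
    have "E \<subseteq> ?FA"
    proof
      fix e assume e: "e \<in> E"
      show "e \<in> ?FA"
      proof (cases "e \<in> cl M {w, y}")
        case True
        moreover have "cl M {w, y} \<subseteq> ?FA" by (rule cl_pair_sub2) (use sA wA in blast)+
        ultimately show ?thesis by blast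
      next
        case False
        then obtain t' where t': "t' \<in> Twy" "e \<in> cl M {t', w, y}" using Twy_cov e by blast
        have "t' \<in> ?FA" using t' Y0 by blast
        moreover have "cl M {t', w, y} \<subseteq> ?FA" by (rule cl_pair_sub) (use sA wA \<open>t' \<in> ?FA\<close> in blast)+
        ultimately show ?thesis using t' by blast
      qed
    qed
    then have "r E \<le> r (insert y A)" by (rule rk_le_cl)
    then show False using bd by linarith
  qed
  have fX: "finite ?X" using fTwy by blast
  have eqY: "Twy - ?X = ?Y" by blast
  have "tutte_sep Swy 1 ?X"
    unfolding tutte_sep_def gSwy
  proof (intro conjI)
    show "?X \<subseteq> Twy" by blast
    show "1 \<le> card ?X" using fX tX by (metis One_nat_def Suc_leI card_gt_0_iff empty_iff)
    show "1 \<le> card (Twy - ?X)" unfolding eqY using Yne fTwy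
      by (metis One_nat_def Suc_leI card_gt_0_iff finite_Diff)
    have r1: "rk Swy ?X = r (?X \<union> {w, y}) - 2" by (rule rSwy) blast
    have r2: "rk Swy (Twy - ?X) = r (?Y \<union> {w, y}) - 2" unfolding eqY by (rule rSwy) blast
    show "rk Swy ?X + rk Swy (Twy - ?X) < rk Swy Twy + 1"
      unfolding r1 r2 rSwy_tot using rX rY bd s unfolding sepok_def by linarith
  qed
  then show False using Swy3 unfolding three_connected_def by blast
qed

end



context gset
begin

lemma FA_sub: assumes AT: "A \<subseteq> Ty" shows "insert y A \<subseteq> E" "insert y A \<subseteq> cl M (insert y A)"
  using AT TyE yE cl_sub'[of "insert y A"] by auto

lemma step3: assumes s: "sepok A" and wA: "w \<in> A"
  shows "\<exists>A'. sepok A' \<and> w \<in> A' \<and> r (insert y A') = 3"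
proof (cases "r (insert y A) = 3")
  case True
  then show ?thesis using s wA by blast
next
  case False
  let ?FA = "cl M (insert y A)" let ?FB = "cl M (insert y (Ty - A))"
  let ?X = "Twy \<inter> ?FA" let ?Y = "Twy - ?FA"
  have AT: "A \<subseteq> Ty" using s unfolding sepok_def by blast
  have AE: "insert y A \<subseteq> E" using AT TyE yE by blast
  have BE: "insert y (Ty - A) \<subseteq> E" using TyE yE by blast
  have sA: "insert y A \<subseteq> ?FA" using cl_sub'[OF AE] .
  have sB: "insert y (Ty - A) \<subseteq> ?FB" using cl_sub'[OF BE] .
  note bd = sep_bounds[OF s]
  have r4: "4 \<le> r (insert y A)" using False bd by linarith
  have wnB: "w \<notin> ?FB" using NoW[OF s wA] .
  have wyFA: "cl M {w, y} \<subseteq> ?FA" by (rule cl_pair_sub2) (use sA wA in blast)+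
  have X2: "2 \<le> card ?X"
  proof (rule ccontr)
    assume "\<not> 2 \<le> card ?X"
    then have cX: "card ?X \<le> 1" by simp
    have "?FA \<subseteq> cl M (?X \<union> {w, y})"
    proof
      fix e assume e: "e \<in> ?FA"
      have eE: "e \<in> E" using e cl_ground by blast
      show "e \<in> cl M (?X \<union> {w, y})"
      proof (cases "e \<in> cl M {w, y}")
        case True
        then show ?thesis using cl_mono[of "{w, y}" "?X \<union> {w, y}"] by blast
      next
        case False
        then obtain t where t: "t \<in> Twy" "e \<in> cl M {t, w, y}" using Twy_cov eE by blast
        have tE: "t \<in> E" using t Twy by blast
        have "t \<in> cl M (insert e {w, y})"
          by (rule exch[OF wyE tE Twy_nl[OF t(1)] eE False]) (use t in simp)
        moreover have "cl M {e, w, y} \<subseteq> ?FA" by (rule cl_pair_sub) (use sA wA e in blast)+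
        ultimately have "t \<in> ?X" using t by auto
        then show ?thesis using t cl_mono[of "{t, w, y}" "?X \<union> {w, y}"] by blast
      qed
    qed
    then have "insert y A \<subseteq> cl M (?X \<union> {w, y})" using sA by blast
    then have "r (insert y A) \<le> r (?X \<union> {w, y})" by (rule rk_le_cl)
    also have "\<dots> \<le> card (?X \<union> {w, y})" using card_rk_le[of "?X \<union> {w, y}"] wyE Twy by blast
    also have "\<dots> \<le> card ?X + card {w, y}" by (rule card_Un_le)
    also have "\<dots> \<le> 3" using cX by (simp add: card_insert_if)
    finally show False using r4 by simp
  qed
  have Y1: "card ?Y \<le> 1"
  proof (rule ccontr)
    assume "\<not> card ?Y \<le> 1"
    then have cY: "2 \<le> card ?Y" by simp
    have eqY: "Twy - ?X = ?Y" by blast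
    have XFA: "?X \<union> {w, y} \<subseteq> ?FA" using sA wA by blast
    have rX: "r (?X \<union> {w, y}) \<le> r (insert y A)" using rk_le_cl[OF XFA] .
    have YB: "?Y \<subseteq> Ty - A" using TwyTy sA by blast
    have YFB: "?Y \<union> {w, y} \<subseteq> insert w ?FB" using YB sB by blast
    have "r (?Y \<union> {w, y}) \<le> r (insert w ?FB)" by (rule rk_mono[OF YFB])
    also have "\<dots> \<le> Suc (r ?FB)" by (rule rk_insert)
    also have "\<dots> = Suc (r (insert y (Ty - A)))" using rk_cl by simp
    finally have rY: "r (?Y \<union> {w, y}) \<le> Suc (r (insert y (Ty - A)))" .
    have "tutte_sep Swy 2 ?X"
      unfolding tutte_sep_def gSwy
    proof (intro conjI)
      show "?X \<subseteq> Twy" by blast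
      show "2 \<le> card ?X" by (rule X2)
      show "2 \<le> card (Twy - ?X)" unfolding eqY by (rule cY)
      have r1: "rk Swy ?X = r (?X \<union> {w, y}) - 2" by (rule rSwy) blast
      have r2: "rk Swy (Twy - ?X) = r (?Y \<union> {w, y}) - 2" unfolding eqY by (rule rSwy) blast
      show "rk Swy ?X + rk Swy (Twy - ?X) < rk Swy Twy + 2"
        unfolding r1 r2 rSwy_tot using rX rY bd s unfolding sepok_def by linarith
    qed
    then show False using Swy3 unfolding three_connected_def by blast
  qed
  let ?P = "cl M (?Y \<union> {w, y})"
  have YE: "?Y \<union> {w, y} \<subseteq> E" using Twy wyE by blast
  have sP: "?Y \<union> {w, y} \<subseteq> ?P" using cl_sub'[OF YE] .
  have rP: "r ?P \<le> 3"
  proof -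
    have "r ?P = r (?Y \<union> {w, y})" by (rule rk_cl)
    also have "\<dots> \<le> card (?Y \<union> {w, y})" using card_rk_le[OF YE] .
    also have "\<dots> \<le> card ?Y + card {w, y}" by (rule card_Un_le)
    also have "\<dots> \<le> 3" using Y1 by (simp add: card_insert_if)
    finally show ?thesis .
  qed
  have outP: "E - ?FA \<subseteq> ?P"
  proof
    fix e assume e: "e \<in> E - ?FA"
    then have eE: "e \<in> E" and enA: "e \<notin> ?FA" by auto
    have "e \<notin> cl M {w, y}" using enA wyFA by blast
    then obtain t where t: "t \<in> Twy" "e \<in> cl M {t, w, y}" using Twy_cov eE by blast
    have "t \<notin> ?FA"
    proof
      assume "t \<in> ?FA"
      then have "cl M {t, w, y} \<subseteq> ?FA" by (intro cl_pair_sub) (use sA wA in blast)+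
      then show False using t enA by blast
    qed
    then have "t \<in> ?Y" using t by blast
    then show "e \<in> ?P" using t cl_mono[of "{t, w, y}" "?Y \<union> {w, y}"] by blast
  qed
  let ?A' = "Ty \<inter> ?P"
  have wA': "w \<in> ?A'" using wTy sP by blast
  have yP: "y \<in> ?P" using sP by blast
  have A'T: "?A' \<subseteq> Ty" by blast
  have fA': "finite ?A'" using fTy by blast
  have Pcl: "?P \<subseteq> cl M (insert y ?A')"
  proof
    fix e assume e: "e \<in> ?P"
    have eE: "e \<in> E" using e cl_ground by blast
    show "e \<in> cl M (insert y ?A')"
    proof (cases "e = y")
      case True
      then show ?thesis using cl_sub'[of "insert y ?A'"] yE TyE by blast
    next
      case False
      then obtain t where t: "t \<in> Ty" "e \<in> cl M {t, y}" using Ty_cov eE by blast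
      have tE: "t \<in> E" using t TyE by blast
      have ty: "t \<noteq> y" using t Ty by blast
      have yE': "{y} \<subseteq> E" using yE by blast
      have tny: "t \<notin> cl M {y}"
      proof
        assume "t \<in> cl M {y}"
        then have "r (insert t {y}) = r {y}" by (rule in_cl)
        then show False using rk2[OF tE yE ty] rk1[OF yE] by simp
      qed
      have eny: "e \<notin> cl M {y}"
      proof
        assume "e \<in> cl M {y}"
        then have "r (insert e {y}) = r {y}" by (rule in_cl)
        then show False using rk2[OF eE yE False] rk1[OF yE] by simp
      qed
      have "t \<in> cl M (insert e {y})"
        by (rule exch[OF yE' tE tny eE eny]) (use t in simp)
      moreover have "cl M {e, y} \<subseteq> ?P" by (rule cl_pair_sub2) (use e yP in blast)+
      ultimately have "t \<in> ?A'" using t by auto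
      then show ?thesis using t cl_mono[of "{t, y}" "insert y ?A'"] by blast
    qed
  qed
  have cA': "2 \<le> card ?A'"
  proof (rule ccontr)
    assume "\<not> 2 \<le> card ?A'"
    then have "card ?A' \<le> 1" by simp
    then have "\<forall>a\<in>?A'. \<forall>b\<in>?A'. a = b" using card_le_Suc0_iff_eq[OF fA'] by simp
    then have A'w: "?A' = {w}" using wA' by blast
    have "E \<subseteq> ?FA"
    proof
      fix e assume e: "e \<in> E"
      show "e \<in> ?FA"
      proof (rule ccontr)
        assume en: "e \<notin> ?FA"
        then have "e \<in> ?P" using outP e by blast
        then have "e \<in> cl M (insert y ?A')" using Pcl by blast
        then have "e \<in> cl M {w, y}" using A'w by (simp add: insert_commute)
        then show False using en wyFA by blast
      qed
    qed
    then have "r E \<le> r (insert y A)" by (rule rk_le_cl)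
    then show False using bd by linarith
  qed
  have rA': "r (insert y ?A') = 3"
  proof -
    have "insert y ?A' \<subseteq> ?P" using yP by blast
    then have "r (insert y ?A') \<le> r ?P" by (rule rk_mono)
    then show ?thesis using rP vert[OF A'T cA'] by linarith
  qed
  have BA'sub: "Ty - ?A' \<subseteq> ?FA" using outP TyE by blast
  have rB': "r (insert y (Ty - ?A')) \<le> r (insert y A)"
  proof (rule rk_le_cl)
    show "insert y (Ty - ?A') \<subseteq> cl M (insert y A)" using BA'sub sA by blast
  qed
  have cB': "2 \<le> card (Ty - ?A')"
  proof (rule ccontr)
    assume "\<not> 2 \<le> card (Ty - ?A')"
    then have cb: "card (Ty - ?A') \<le> 1" by simp
    have PE: "?P \<subseteq> E" by (rule cl_ground)
    have cP: "2 \<le> card ?P"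
    proof -
      have "{w, y} \<subseteq> ?P" using sP by blast
      then have "card {w, y} \<le> card ?P" using card_mono finite_subset[OF PE finE] by blast
      then show ?thesis using wy by simp
    qed
    have "r ?P < r E" using rP bd r4 by linarith
    moreover have "r (E - ?P) \<le> 2"
    proof -
      have "E - ?P \<subseteq> cl M (insert y (Ty - ?A'))"
      proof
        fix e assume e: "e \<in> E - ?P"
        have eE: "e \<in> E" using e by blast
        have ey: "e \<noteq> y" using e yP by blast
        obtain t where t: "t \<in> Ty" "e \<in> cl M {t, y}" using Ty_cov[OF eE ey] by blast
        have "t \<notin> ?P"
        proof
          assume "t \<in> ?P"
          then have "cl M {t, y} \<subseteq> ?P" by (intro cl_pair_sub2) (use yP in blast)+
          then show False using t e by blast
        qed
        then have "t \<in> Ty - ?A'" using t by blast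
        then show "e \<in> cl M (insert y (Ty - ?A'))" using t cl_mono[of "{t, y}" "insert y (Ty - ?A')"] by blast
      qed
      then have "r (E - ?P) \<le> r (insert y (Ty - ?A'))" by (rule rk_le_cl)
      also have "\<dots> \<le> card (insert y (Ty - ?A'))" using card_rk_le[of "insert y (Ty - ?A')"] TyE yE by blast
      also have "\<dots> \<le> Suc (card (Ty - ?A'))" by (rule card_insert_le_m1) simp_all
      finally show ?thesis using cb by linarith
    qed
    ultimately show False using lemK[OF PE cP] by blast
  qed
  have "sepok ?A'"
    unfolding sepok_def using A'T cA' cB' rA' rB' bd by linarith
  then show ?thesis using wA' rA' by blast
qed

lemma fin: assumes s: "sepok A" and wA: "w \<in> A" and r3: "r (insert y A) = 3"
  shows "\<exists>H. H \<subseteq> E \<and> cl M H = H \<and> y \<in> H \<and> w \<notin> H \<and> r H + 1 = r E \<and> r (E - H) = 3"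
proof -
  let ?FA = "cl M (insert y A)" let ?H = "cl M (insert y (Ty - A))"
  have AT: "A \<subseteq> Ty" using s unfolding sepok_def by blast
  have BE: "insert y (Ty - A) \<subseteq> E" using TyE yE by blast
  have sB: "insert y (Ty - A) \<subseteq> ?H" using cl_sub'[OF BE] .
  note bd = sep_bounds[OF s]
  have wnH: "w \<notin> ?H" using NoW[OF s wA] .
  have HE: "?H \<subseteq> E" by (rule cl_ground)
  have rH: "r ?H = r (insert y (Ty - A))" by (rule rk_cl)
  have Dsub: "E - ?H \<subseteq> ?FA" using cover[OF AT] by blast
  have rD3: "r (E - ?H) \<le> 3" using rk_le_cl[OF Dsub] r3 by simp
  have Dne: "E - ?H \<noteq> {}" using wnH wE by blast
  have cH: "2 \<le> card ?H"
  proof -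
    have "card (insert y (Ty - A)) \<le> card ?H" using card_mono finite_subset[OF HE finE] sB by blast
    moreover have "card (insert y (Ty - A)) = Suc (card (Ty - A))" proof -
      have "y \<notin> Ty - A" using Ty by blast
      moreover have "finite (Ty - A)" using fTy by blast
      ultimately show ?thesis by simp
    qed
    ultimately show ?thesis using s unfolding sepok_def by linarith
  qed
  have rHle: "r ?H + 1 \<le> r E" using rH s r3 unfolding sepok_def by linarith
  note sq = sepQ[OF HE cH Dne]
  have rHge: "r E \<le> r ?H + 1"
  proof (cases "2 \<le> card (E - ?H)")
    case True
    then show ?thesis using sq(2) rD3 by linarith
  next
    case False
    then have "card (E - ?H) \<le> 1" by simp
    then have "r (E - ?H) \<le> 1" using card_rk_le[of "E - ?H"] by simp
    then show ?thesis using sq(1) by linarith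
  qed
  have rD: "r (E - ?H) = 3"
  proof (rule ccontr)
    assume "r (E - ?H) \<noteq> 3"
    then have "r (E - ?H) \<le> 2" using rD3 by simp
    moreover have "r ?H < r E" using rHle by simp
    ultimately show False using lemK[OF HE cH] by blast
  qed
  show ?thesis
  proof (intro exI conjI)
    show "?H \<subseteq> E" by (rule HE)
    show "cl M ?H = ?H" by (rule cl_idem)
    show "y \<in> ?H" using sB by blast
    show "w \<notin> ?H" by (rule wnH)
    show "r ?H + 1 = r E" using rHle rHge by simp
    show "r (E - ?H) = 3" by (rule rD)
  qed
qed

end



context gset
begin

abbreviation "Sy \<equiv> restrict (contract M {y}) Ty"

lemma gSy: "ground Sy = Ty" using ground_contr_restr Ty by auto

lemma rSy: "A \<subseteq> Ty \<Longrightarrow> rk Sy A = r (insert y A) - 1"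
proof -
  assume A: "A \<subseteq> Ty"
  have "rk Sy A = r (A \<union> {y}) - r {y}" using rk_contr[of "{y}" A Ty] A Ty yE by blast
  then show ?thesis using rk1[OF yE] by simp
qed

lemma span_y: "r (insert y Ty) = r E"
proof -
  have "E \<subseteq> cl M (insert y Ty)"
  proof
    fix e assume e: "e \<in> E"
    show "e \<in> cl M (insert y Ty)"
    proof (cases "e = y")
      case True
      then show ?thesis using cl_sub'[of "insert y Ty"] TyE yE by blast
    next
      case False
      then obtain t where t: "t \<in> Ty" "e \<in> cl M {t, y}" using Ty_cov e by blast
      then show ?thesis using cl_mono[of "{t, y}" "insert y Ty"] by blast
    qed
  qed
  then have "r E \<le> r (insert y Ty)" by (rule rk_le_cl)
  then show ?thesis using rk_le_E[of "insert y Ty"] by simp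
qed

lemma ry_ge1: "1 \<le> r (insert y A)"
  using rk_mono[of "{y}" "insert y A"] rk1[OF yE] by simp

lemma single_side: assumes A: "A \<subseteq> Ty" "card A = 1" "1 \<le> card (Ty - A)"
  and rB: "r (insert y (Ty - A)) < r E" shows False
proof -
  let ?Q = "cl M (insert y (Ty - A))"
  have BE: "insert y (Ty - A) \<subseteq> E" using TyE yE by blast
  have QE: "?Q \<subseteq> E" by (rule cl_ground)
  have cQ: "2 \<le> card ?Q"
  proof -
    have "card (insert y (Ty - A)) \<le> card ?Q" using card_mono finite_subset[OF QE finE] cl_sub'[OF BE] by blast
    moreover have "card (insert y (Ty - A)) = Suc (card (Ty - A))"
    proof -
      have "y \<notin> Ty - A" using Ty by blast
      moreover have "finite (Ty - A)" using fTy by blast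
      ultimately show ?thesis by simp
    qed
    ultimately show ?thesis using A by linarith
  qed
  have rQ: "r ?Q < r E" using rk_cl rB by simp
  obtain a where a: "A = {a}" using A(2) card_1_singletonE by blast
  have aE: "a \<in> E" using a A TyE by blast
  have ay: "a \<noteq> y" using a A Ty by blast
  have "E - ?Q \<subseteq> cl M (insert y A)" using cover[OF A(1)] by blast
  then have "r (E - ?Q) \<le> r (insert y A)" by (rule rk_le_cl)
  also have "\<dots> = 2" using a rk2[OF yE aE] ay by simp
  finally show False using lemK[OF QE cQ rQ] by blast
qed

lemma sep_exists: assumes n3: "\<not> three_connected Sy" shows "\<exists>A. sepok A \<and> w \<in> A"
proof -
  obtain X k where k: "k = 1 \<or> k = 2" and t: "tutte_sep Sy k X"
    using n3 unfolding three_connected_def by blast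
  have XT: "X \<subseteq> Ty" and cX: "k \<le> card X" and cB: "k \<le> card (Ty - X)"
    and rr: "rk Sy X + rk Sy (Ty - X) < rk Sy Ty + k"
    using t unfolding tutte_sep_def gSy by auto
  have BX: "Ty - (Ty - X) = X" using XT by blast
  have rr': "r (insert y X) + r (insert y (Ty - X)) < r E + 1 + k"
  proof -
    have a: "rk Sy (Ty - X) = r (insert y (Ty - X)) - 1" by (rule rSy) blast
    have b: "rk Sy Ty = r E - 1" using rSy[of Ty] span_y by simp
    have c: "1 \<le> r E" using ry_ge1[of Ty] rk_le_E[of "insert y Ty"] by linarith
    show ?thesis using rr rSy[OF XT] a b c ry_ge1[of X] ry_ge1[of "Ty - X"] by linarith
  qed
  have c2X: "2 \<le> card X"
  proof (rule ccontr)
    assume "\<not> 2 \<le> card X"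
    then have "card X = 1" "k = 1" using cX k by auto
    moreover have "r (insert y X) = 2"
    proof -
      obtain a where a: "X = {a}" using \<open>card X = 1\<close> card_1_singletonE by blast
      have "a \<in> E" "a \<noteq> y" using a XT Ty by auto
      then show ?thesis using a rk2[OF yE] by simp
    qed
    ultimately show False using single_side[OF XT] cB rr' by simp
  qed
  have c2B: "2 \<le> card (Ty - X)"
  proof (rule ccontr)
    assume "\<not> 2 \<le> card (Ty - X)"
    then have c1: "card (Ty - X) = 1" "k = 1" using cB k by auto
    moreover have "r (insert y (Ty - X)) = 2"
    proof -
      obtain a where a: "Ty - X = {a}" using c1 card_1_singletonE by blast
      have "a \<in> E" "a \<noteq> y" using a Ty by auto
      then show ?thesis using a rk2[OF yE] by simp
    qed
    moreover have "1 \<le> card (Ty - (Ty - X))" using BX cX c1 by simp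
    ultimately show False using single_side[of "Ty - X"] BX rr' by auto
  qed
  have sX: "sepok X" unfolding sepok_def using XT c2X c2B rr' k by auto
  show ?thesis
  proof (cases "w \<in> X")
    case True
    then show ?thesis using sX by blast
  next
    case False
    then show ?thesis using sepok_sym[OF sX] wTy by blast
  qed
qed

lemma G_main: assumes n3: "\<not> three_connected Sy"
  shows "\<exists>H. H \<subseteq> E \<and> cl M H = H \<and> y \<in> H \<and> w \<notin> H \<and> r H + 1 = r E \<and> r (E - H) = 3"
proof -
  obtain A where "sepok A" "w \<in> A" using sep_exists[OF n3] by blast
  then obtain A' where "sepok A'" "w \<in> A'" "r (insert y A') = 3" using step3 by blast
  then show ?thesis using fin by blast
qed

end



context mat
begin

lemma par_sym: "parallel M1 a b \<Longrightarrow> parallel M1 b a"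
  unfolding parallel_def by (auto simp: insert_commute)

lemma par_cl: assumes X: "X \<subseteq> E" and p: "parallel (contract M X) a b"
  shows "a \<in> cl M (insert b X)"
proof -
  have p': "a \<in> E - X" "r (insert b X) = Suc (r X)" "r (insert a (insert b X)) \<noteq> Suc (Suc (r X))"
    using p unfolding parallel_contract by auto
  have "r (insert a (insert b X)) \<le> Suc (r (insert b X))" by (rule rk_insert)
  then have "r (insert a (insert b X)) \<le> r (insert b X)" using p' by linarith
  then show ?thesis using p' in_clI by blast
qed

lemma par_trans: assumes X: "X \<subseteq> E" and p1: "parallel (contract M X) a e"
  and p2: "parallel (contract M X) e b" and ab: "a \<noteq> b"
  shows "parallel (contract M X) a b"
proof -
  have ae: "a \<in> cl M (insert e X)" by (rule par_cl[OF X p1])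
  have eb: "e \<in> cl M (insert b X)" by (rule par_cl[OF X p2])
  have bE: "b \<in> E" using p2 unfolding parallel_contract by auto
  have "insert e X \<subseteq> cl M (insert b X)" using eb cl_sub'[of "insert b X"] X bE by blast
  then have "a \<in> cl M (insert b X)" using ae cl_subset_cl by blast
  then have "r (insert a (insert b X)) = r (insert b X)" by (rule in_cl)
  then show ?thesis using p1 p2 ab unfolding parallel_contract by auto
qed

definition uncov :: "'a set \<Rightarrow> 'a set \<Rightarrow> 'a set" where
  "uncov X T0 = {e \<in> E - X. \<not> loop (contract M X) e \<and> (\<forall>t\<in>T0. t \<noteq> e \<and> \<not> parallel (contract M X) e t)}"

lemma ext_aux:
  assumes X: "X \<subseteq> E"
  shows "\<forall>T0. card (uncov X T0) = n \<longrightarrow> T0 \<subseteq> E - X \<longrightarrow> (\<forall>t\<in>T0. \<not> loop (contract M X) t) \<longrightarrow>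
     (\<forall>a\<in>T0. \<forall>b\<in>T0. a \<noteq> b \<longrightarrow> \<not> parallel (contract M X) a b) \<longrightarrow>
     (\<exists>T. T0 \<subseteq> T \<and> simplification (contract M X) (restrict (contract M X) T))"
proof (induction n rule: less_induct)
  case (less n)
  show ?case
  proof (intro allI impI)
    fix T0 assume c: "card (uncov X T0) = n" and T0: "T0 \<subseteq> E - X"
      and nl: "\<forall>t\<in>T0. \<not> loop (contract M X) t"
      and pw: "\<forall>a\<in>T0. \<forall>b\<in>T0. a \<noteq> b \<longrightarrow> \<not> parallel (contract M X) a b"
    let ?M1 = "contract M X"
    show "\<exists>T. T0 \<subseteq> T \<and> simplification ?M1 (restrict ?M1 T)"
    proof (cases "uncov X T0 = {}")
      case True
      have "simplification ?M1 (restrict ?M1 T0)"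
        unfolding simplification_def ground_contract
      proof (intro exI conjI ballI impI)
        show "T0 \<subseteq> E - X" by (rule T0)
        show "restrict ?M1 T0 = restrict ?M1 T0" ..
      next
        fix t assume "t \<in> T0" then show "\<not> loop ?M1 t" using nl by blast
      next
        fix e assume e: "e \<in> E - X" and enl: "\<not> loop ?M1 e"
        have "e \<notin> uncov X T0" using True by blast
        then obtain t where t: "t \<in> T0" "t = e \<or> parallel ?M1 e t" using e enl unfolding uncov_def by blast
        show "\<exists>!t. t \<in> T0 \<and> (t = e \<or> parallel ?M1 e t)"
        proof (rule ex1I[where a = t])
          show "t \<in> T0 \<and> (t = e \<or> parallel ?M1 e t)" using t by blast
        next
          fix t2 assume t2: "t2 \<in> T0 \<and> (t2 = e \<or> parallel ?M1 e t2)"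
          show "t2 = t"
          proof (rule ccontr)
            assume ne: "t2 \<noteq> t"
            have "parallel ?M1 t2 t"
            proof (cases "t2 = e")
              case True
              then have "t \<noteq> e" using ne by simp
              then have "parallel ?M1 e t" using t(2) by simp
              then show ?thesis using True by simp
            next
              case False
              then have p2: "parallel ?M1 e t2" using t2 by blast
              show ?thesis
              proof (cases "t = e")
                case True
                then show ?thesis using par_sym[OF p2] by simp
              next
                case False
                then have "parallel ?M1 e t" using t by blast
                then show ?thesis using par_trans[OF X par_sym[OF p2]] ne by blast
              qed
            qed
            moreover have "t2 \<in> T0" using t2 by simp
            ultimately show False using pw t(1) ne by blast
          qed
        qed
      qed
      then show ?thesis by blast
    next
      case False
      then obtain e where e: "e \<in> uncov X T0" by blast
      let ?T1 = "insert e T0"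
      have eE: "e \<in> E - X" and enl: "\<not> loop ?M1 e" and enp: "\<forall>t\<in>T0. t \<noteq> e \<and> \<not> parallel ?M1 e t"
        using e unfolding uncov_def by auto
      have sub: "uncov X ?T1 \<subseteq> uncov X T0 - {e}" unfolding uncov_def by auto
      have fin: "finite (uncov X T0)" using finE unfolding uncov_def by auto
      have lt: "card (uncov X ?T1) < n"
      proof -
        have "card (uncov X ?T1) \<le> card (uncov X T0 - {e})" using sub fin by (intro card_mono) auto
        also have "\<dots> < card (uncov X T0)" using fin e by (intro card_Diff1_less) auto
        finally show ?thesis using c by simp
      qed
      have h1: "?T1 \<subseteq> E - X" using T0 eE by blast
      have h2: "\<forall>t\<in>?T1. \<not> loop ?M1 t" using nl enl by blast
      have h3: "\<forall>a\<in>?T1. \<forall>b\<in>?T1. a \<noteq> b \<longrightarrow> \<not> parallel ?M1 a b"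
      proof (intro ballI impI)
        fix a b assume a: "a \<in> ?T1" and b: "b \<in> ?T1" and ab: "a \<noteq> b"
        show "\<not> parallel ?M1 a b"
        proof (cases "a = e")
          case True
          then show ?thesis using enp b ab by blast
        next
          case False
          note aF = False
          show ?thesis
          proof (cases "b = e")
            case True
            have "\<not> parallel ?M1 e a" using enp a aF by blast
            then show ?thesis using True par_sym[of ?M1 a e] by blast
          next
            case False
            then show ?thesis using pw a b ab aF by blast
          qed
        qed
      qed
      have ih: "\<forall>T0. card (uncov X T0) = card (uncov X ?T1) \<longrightarrow> T0 \<subseteq> E - X \<longrightarrow> (\<forall>t\<in>T0. \<not> loop ?M1 t) \<longrightarrow>
         (\<forall>a\<in>T0. \<forall>b\<in>T0. a \<noteq> b \<longrightarrow> \<not> parallel ?M1 a b) \<longrightarrow>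
         (\<exists>T. T0 \<subseteq> T \<and> simplification ?M1 (restrict ?M1 T))" by (rule less.IH[OF lt])
      have "\<exists>T. ?T1 \<subseteq> T \<and> simplification ?M1 (restrict ?M1 T)"
        using spec[OF ih, of ?T1] h1 h2 h3 by blast
      then show ?thesis by blast
    qed
  qed
qed

lemma ext_simp:
  assumes X: "X \<subseteq> E" and T0: "T0 \<subseteq> E - X" and nl: "\<forall>t\<in>T0. \<not> loop (contract M X) t"
    and pw: "\<forall>a\<in>T0. \<forall>b\<in>T0. a \<noteq> b \<longrightarrow> \<not> parallel (contract M X) a b"
  shows "\<exists>T. T0 \<subseteq> T \<and> simplification (contract M X) (restrict (contract M X) T)"
  using ext_aux[OF X] T0 nl pw by blast

lemma simp_facts:
  assumes X: "X \<subseteq> E" and s: "simplification (contract M X) S"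
  obtains T where "S = restrict (contract M X) T" "T \<subseteq> E - X" "ground S = T"
    "\<And>t. t \<in> T \<Longrightarrow> r (insert t X) = Suc (r X)"
    "\<And>a b. a \<in> T \<Longrightarrow> b \<in> T \<Longrightarrow> a \<noteq> b \<Longrightarrow> r (insert a (insert b X)) = Suc (Suc (r X))"
    "\<And>e. e \<in> E \<Longrightarrow> e \<notin> cl M X \<Longrightarrow> \<exists>t\<in>T. e \<in> cl M (insert t X)"
proof -
  let ?M1 = "contract M X"
  obtain T where T: "T \<subseteq> E - X" "S = restrict ?M1 T" "\<forall>t\<in>T. \<not> loop ?M1 t"
    "\<forall>x\<in>E - X. \<not> loop ?M1 x \<longrightarrow> (\<exists>!t. t \<in> T \<and> (t = x \<or> parallel ?M1 x t))"
    using s unfolding simplification_def ground_contract by blast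
  have g: "ground S = T" using T ground_contr_restr by auto
  have nl: "\<And>t. t \<in> T \<Longrightarrow> r (insert t X) = Suc (r X)" using T(1,3) unfolding loop_contract by blast
  have pw: "\<And>a b. a \<in> T \<Longrightarrow> b \<in> T \<Longrightarrow> a \<noteq> b \<Longrightarrow> r (insert a (insert b X)) = Suc (Suc (r X))"
  proof -
    fix a b assume ab: "a \<in> T" "b \<in> T" "a \<noteq> b"
    have "\<not> parallel ?M1 a b"
    proof
      assume p: "parallel ?M1 a b"
      have "a \<in> E - X" "\<not> loop ?M1 a" using ab T by auto
      then have "\<exists>!t. t \<in> T \<and> (t = a \<or> parallel ?M1 a t)" using T(4) by blast
      moreover have "a \<in> T \<and> (a = a \<or> parallel ?M1 a a)" using ab by blast
      moreover have "b \<in> T \<and> (b = a \<or> parallel ?M1 a b)" using ab p by blast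
      ultimately show False using ab(3) by blast
    qed
    then show "r (insert a (insert b X)) = Suc (Suc (r X))"
      using ab T(1) nl[of a] nl[of b] unfolding parallel_contract by auto
  qed
  have cov: "\<And>e. e \<in> E \<Longrightarrow> e \<notin> cl M X \<Longrightarrow> \<exists>t\<in>T. e \<in> cl M (insert t X)"
  proof -
    fix e assume e: "e \<in> E" "e \<notin> cl M X"
    have eX: "e \<notin> X" using e cl_sub'[OF X] by blast
    have "\<not> loop ?M1 e" using not_cl_rk[OF e] unfolding loop_contract by simp
    then obtain t where t: "t \<in> T" "t = e \<or> parallel ?M1 e t" using T(4) e eX by blast
    show "\<exists>t\<in>T. e \<in> cl M (insert t X)"
    proof (cases "t = e")
      case True
      then show ?thesis using t cl_sub'[of "insert e X"] X e by blast
    next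
      case False
      then show ?thesis using t par_cl[OF X] by blast
    qed
  qed
  show ?thesis using that[OF T(2) T(1) g nl pw cov] .
qed

lemma contract_delete_eq: "delete (contract S0 C) D =
  \<lparr>ground = ground S0 - C - D, indep = (\<lambda>I. I \<subseteq> ground S0 - C - D \<and> rk S0 (I \<union> C) = card I + rk S0 C)\<rparr>"
  unfolding delete_def restrict_def contract_def by auto

end



context gset
begin

lemma minor_up: assumes hm: "has_minor Swy N" shows "has_minor Sy N"
proof -
  obtain M' where m: "is_minor M' Swy" and iso: "iso N M'" using hm unfolding has_minor_def by blast
  obtain C D where CD: "C \<subseteq> Twy" "D \<subseteq> Twy" "C \<inter> D = {}" "M' = delete (contract Swy C) D"
    using m unfolding is_minor_def gSwy by blast
  let ?C' = "insert w C" let ?D' = "D \<union> (Ty - Twy - {w})"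
  have wT: "w \<notin> Twy" using Twy by blast
  have g: "Twy - C - D = Ty - ?C' - ?D'" using TwyTy wT CD(1,2) by blast
  have ieq: "\<And>I. I \<subseteq> Twy - C - D \<Longrightarrow>
     (rk Swy (I \<union> C) = card I + rk Swy C) \<longleftrightarrow> (rk Sy (I \<union> ?C') = card I + rk Sy ?C')"
  proof -
    fix I assume I: "I \<subseteq> Twy - C - D"
    have a1: "rk Swy (I \<union> C) = r (I \<union> C \<union> {w, y}) - 2" by (rule rSwy) (use I CD(1) in blast)
    have a2: "rk Swy C = r (C \<union> {w, y}) - 2" by (rule rSwy) (use CD(1) in blast)
    have b1: "rk Sy (I \<union> ?C') = r (insert y (I \<union> ?C')) - 1" by (rule rSy) (use I CD(1) TwyTy wTy in blast)
    have b2: "rk Sy ?C' = r (insert y ?C') - 1" by (rule rSy) (use CD(1) TwyTy wTy in blast)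
    have e1: "insert y (I \<union> ?C') = I \<union> C \<union> {w, y}" by blast
    have e2: "insert y ?C' = C \<union> {w, y}" by blast
    have g1: "2 \<le> r (C \<union> {w, y})" using rwy rk_mono[of "{w,y}" "C \<union> {w, y}"] by simp
    have g2: "2 \<le> r (I \<union> C \<union> {w, y})" using rwy rk_mono[of "{w,y}" "I \<union> C \<union> {w, y}"] by simp
    show "(rk Swy (I \<union> C) = card I + rk Swy C) \<longleftrightarrow> (rk Sy (I \<union> ?C') = card I + rk Sy ?C')"
      unfolding a1 a2 b1 b2 e1 e2 using g1 g2 by linarith
  qed
  have eqM: "M' = delete (contract Sy ?C') ?D'"
  proof -
    have l: "M' = \<lparr>ground = Twy - C - D, indep = (\<lambda>I. I \<subseteq> Twy - C - D \<and> rk Swy (I \<union> C) = card I + rk Swy C)\<rparr>"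
      using contract_delete_eq[of Swy C D] unfolding gSwy CD(4) .
    have r': "delete (contract Sy ?C') ?D' = \<lparr>ground = Ty - ?C' - ?D', indep = (\<lambda>I. I \<subseteq> Ty - ?C' - ?D' \<and> rk Sy (I \<union> ?C') = card I + rk Sy ?C')\<rparr>"
      using contract_delete_eq[of Sy ?C' ?D'] unfolding gSy .
    have f: "(\<lambda>I. I \<subseteq> Ty - ?C' - ?D' \<and> rk Swy (I \<union> C) = card I + rk Swy C) =
             (\<lambda>I. I \<subseteq> Ty - ?C' - ?D' \<and> rk Sy (I \<union> ?C') = card I + rk Sy ?C')"
    proof
      fix I show "(I \<subseteq> Ty - ?C' - ?D' \<and> rk Swy (I \<union> C) = card I + rk Swy C) =
             (I \<subseteq> Ty - ?C' - ?D' \<and> rk Sy (I \<union> ?C') = card I + rk Sy ?C')"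
        using ieq[of I] g by auto
    qed
    show ?thesis unfolding l r' g f ..
  qed
  have "is_minor (delete (contract Sy ?C') ?D') Sy"
    unfolding is_minor_def gSy
  proof (intro exI conjI)
    show "?C' \<subseteq> Ty" using CD(1) TwyTy wTy by blast
    show "?D' \<subseteq> Ty" using CD(2) TwyTy by blast
    show "?C' \<inter> ?D' = {}" using CD(1,2,3) wT by blast
  qed (rule refl)
  then show ?thesis using iso eqM unfolding has_minor_def by blast
qed

end

context tcm
begin

lemma G_final:
  assumes wE: "w \<in> E" and yE: "y \<in> E" and wy: "w \<noteq> y"
    and good: "si_contract_good M N {w, y}" and nvc: "\<not> vert_contractible M N y"
  shows "\<exists>H. H \<subseteq> E \<and> cl M H = H \<and> y \<in> H \<and> w \<notin> H \<and> r H + 1 = r E \<and> r (E - H) = 3"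
proof -
  have wyE: "{w, y} \<subseteq> E" using wE yE by blast
  have rwy: "r {w, y} = 2" using rk2[OF wE yE wy] .
  obtain S where s: "simplification (contract M {w, y}) S" and s3: "three_connected S"
    and sm: "has_minor S N" using good unfolding si_contract_good_def by blast
  obtain Twy where T: "S = restrict (contract M {w, y}) Twy" "Twy \<subseteq> E - {w, y}" "ground S = Twy"
    "\<And>t. t \<in> Twy \<Longrightarrow> r (insert t {w, y}) = Suc (r {w, y})"
    "\<And>a b. a \<in> Twy \<Longrightarrow> b \<in> Twy \<Longrightarrow> a \<noteq> b \<Longrightarrow> r (insert a (insert b {w, y})) = Suc (Suc (r {w, y}))"
    "\<And>e. e \<in> E \<Longrightarrow> e \<notin> cl M {w, y} \<Longrightarrow> \<exists>t\<in>Twy. e \<in> cl M (insert t {w, y})"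
    by (rule simp_facts[OF wyE s]) blast
  have Tnl: "\<And>t. t \<in> Twy \<Longrightarrow> t \<notin> cl M {w, y}"
  proof
    fix t assume t: "t \<in> Twy" "t \<in> cl M {w, y}"
    then have "r (insert t {w, y}) = r {w, y}" using in_cl by blast
    then show False using T(4)[OF t(1)] by simp
  qed
  let ?T0 = "insert w Twy"
  have yE1: "{y} \<subseteq> E" using yE by blast
  have ry: "r {y} = 1" using rk1[OF yE] .
  have T0s: "?T0 \<subseteq> E - {y}" using T(2) wE wy by blast
  have T0nl: "\<forall>t\<in>?T0. \<not> loop (contract M {y}) t"
  proof
    fix t assume t: "t \<in> ?T0"
    have "t \<in> E" "t \<noteq> y" using t T0s by auto
    then have "r (insert t {y}) = Suc (r {y})" using rk2[OF _ yE] ry by simp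
    then show "\<not> loop (contract M {y}) t" unfolding loop_contract by simp
  qed
  have r3: "\<And>a b. a \<in> ?T0 \<Longrightarrow> b \<in> ?T0 \<Longrightarrow> a \<noteq> b \<Longrightarrow> r {a, b, y} = 3"
  proof -
    fix a b assume a: "a \<in> ?T0" and b: "b \<in> ?T0" and ab: "a \<noteq> b"
    have le: "r {a, b, y} \<le> 3"
    proof -
      have "r {a, b, y} \<le> card {a, b, y}" using card_rk_le[of "{a,b,y}"] a b T0s yE by blast
      also have "\<dots> \<le> 3" by (simp add: card_insert_if)
      finally show ?thesis .
    qed
    show "r {a, b, y} = 3"
    proof (cases "a = w")
      case True
      then have "b \<in> Twy" using b ab by blast
      then have "r (insert b {w, y}) = 3" using T(4) rwy by simp
      moreover have "insert b {w, y} = {a, b, y}" using True by blast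
      ultimately show ?thesis by simp
    next
      case False
      note aw = False
      show ?thesis
      proof (cases "b = w")
        case True
        then have "a \<in> Twy" using a aw by blast
        then have "r (insert a {w, y}) = 3" using T(4) rwy by simp
        moreover have "insert a {w, y} = {a, b, y}" using True by blast
        ultimately show ?thesis by simp
      next
        case False
        then have abT: "a \<in> Twy" "b \<in> Twy" using a b aw by auto
        have "r (insert a (insert b {w, y})) = 4" using T(5)[OF abT ab] rwy by simp
        moreover have "r (insert w {a, b, y}) \<le> Suc (r {a, b, y})" by (rule rk_insert)
        moreover have "insert w {a, b, y} = insert a (insert b {w, y})" by blast
        ultimately show ?thesis using le by simp
      qed
    qed
  qed
  have T0pw: "\<forall>a\<in>?T0. \<forall>b\<in>?T0. a \<noteq> b \<longrightarrow> \<not> parallel (contract M {y}) a b"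
  proof (intro ballI impI)
    fix a b assume "a \<in> ?T0" "b \<in> ?T0" "a \<noteq> b"
    then have "r {a, b, y} = 3" using r3 by blast
    then show "\<not> parallel (contract M {y}) a b" unfolding parallel_contract using ry by simp
  qed
  obtain Ty0 where "?T0 \<subseteq> Ty0" and sy: "simplification (contract M {y}) (restrict (contract M {y}) Ty0)"
    using ext_simp[OF yE1 T0s T0nl T0pw] by blast
  obtain Ty where Ty: "restrict (contract M {y}) Ty0 = restrict (contract M {y}) Ty" "Ty \<subseteq> E - {y}"
    "ground (restrict (contract M {y}) Ty0) = Ty"
    "\<And>a b. a \<in> Ty \<Longrightarrow> b \<in> Ty \<Longrightarrow> a \<noteq> b \<Longrightarrow> r (insert a (insert b {y})) = Suc (Suc (r {y}))"
    "\<And>e. e \<in> E \<Longrightarrow> e \<notin> cl M {y} \<Longrightarrow> \<exists>t\<in>Ty. e \<in> cl M (insert t {y})"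
    by (rule simp_facts[OF yE1 sy]) blast
  have Ty0: "Ty0 \<inter> (E - {y}) = Ty" using Ty(3) ground_contr_restr by auto
  have T0Ty: "?T0 \<subseteq> Ty" using \<open>?T0 \<subseteq> Ty0\<close> T0s Ty0 by blast
  have Ty_eq: "restrict (contract M {y}) Ty0 = restrict (contract M {y}) Ty" using Ty(1) .
  interpret gs: gset M y w Ty Twy
  proof
    show "y \<in> E" "w \<in> E" "w \<noteq> y" using yE wE wy by auto
    show "Twy \<subseteq> E - {w, y}" using T(2) .
    show "\<And>t. t \<in> Twy \<Longrightarrow> t \<notin> cl M {w, y}" using Tnl .
    show "\<And>e. e \<in> E \<Longrightarrow> e \<notin> cl M {w, y} \<Longrightarrow> \<exists>t\<in>Twy. e \<in> cl M {t, w, y}" using T(6) by simp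
    show "three_connected (restrict (contract M {w, y}) Twy)" using s3 T(1) by simp
    show "Ty \<subseteq> E - {y}" using Ty(2) .
    show "w \<in> Ty" using T0Ty by blast
    show "Twy \<subseteq> Ty" using T0Ty by blast
    show "\<And>a b. a \<in> Ty \<Longrightarrow> b \<in> Ty \<Longrightarrow> a \<noteq> b \<Longrightarrow> r {a, b, y} = 3" using Ty(4) ry by simp
    show "\<And>e. e \<in> E \<Longrightarrow> e \<noteq> y \<Longrightarrow> \<exists>t\<in>Ty. e \<in> cl M {t, y}"
    proof -
      fix e assume e: "e \<in> E" "e \<noteq> y"
      have "e \<notin> cl M {y}"
      proof
        assume "e \<in> cl M {y}"
        then have "r (insert e {y}) = r {y}" by (rule in_cl)
        then show False using rk2[OF e(1) yE e(2)] ry by simp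
      qed
      then show "\<exists>t\<in>Ty. e \<in> cl M {t, y}" using Ty(5) e by simp
    qed
  qed
  have "has_minor gs.Sy N" using gs.minor_up sm T(1) by simp
  moreover have "simplification (contract M {y}) gs.Sy" using sy Ty_eq by simp
  ultimately have "\<not> three_connected gs.Sy" using nvc yE unfolding vert_contractible_def si_contract_good_def by blast
  then show ?thesis using gs.G_main by blast
qed

end



lemma ex_other: assumes "2 \<le> card A" shows "\<exists>a\<in>A. a \<noteq> x"
proof (rule ccontr)
  assume "\<not> (\<exists>a\<in>A. a \<noteq> x)"
  then have "A \<subseteq> {x}" by blast
  then have "card A \<le> card {x}" by (intro card_mono) auto
  then show False using assms by simp
qed

lemma ex_other2: assumes "3 \<le> card A" shows "\<exists>a\<in>A. a \<noteq> x \<and> a \<noteq> z"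
proof (rule ccontr)
  assume "\<not> (\<exists>a\<in>A. a \<noteq> x \<and> a \<noteq> z)"
  then have "A \<subseteq> {x, z}" by blast
  then have "card A \<le> card {x, z}" by (intro card_mono) auto
  also have "\<dots> \<le> 2" by (simp add: card_insert_if)
  finally show False using assms by simp
qed

context tcm
begin

lemma line_cl: assumes L: "L \<subseteq> E" "r L = 2" and ab: "a \<in> L" "b \<in> L" "a \<noteq> b"
  shows "L \<subseteq> cl M {a, b}"
proof
  fix e assume e: "e \<in> L"
  have "r (insert e {a, b}) \<le> r L" by (rule rk_mono) (use e ab in blast)
  also have "\<dots> = r {a, b}" using L rk2[of a b] ab by auto
  finally show "e \<in> cl M {a, b}" using in_clI[of e "{a,b}"] e L by blast
qed

lemma good_facts:
  assumes X: "X \<subseteq> E" and g: "si_contract_good M N X"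
  obtains S T where "simplification (contract M X) S" "three_connected S" "has_minor S N"
    "ground S = T" "T \<subseteq> E - X" "\<And>t. t \<in> T \<Longrightarrow> t \<notin> cl M X"
    "\<And>a b. a \<in> T \<Longrightarrow> b \<in> T \<Longrightarrow> a \<noteq> b \<Longrightarrow> r (insert a (insert b X)) = Suc (Suc (r X))"
proof -
  obtain S where s: "simplification (contract M X) S" "three_connected S" "has_minor S N"
    using g unfolding si_contract_good_def by blast
  obtain T where T: "S = restrict (contract M X) T" "T \<subseteq> E - X" "ground S = T"
    "\<And>t. t \<in> T \<Longrightarrow> r (insert t X) = Suc (r X)"
    "\<And>a b. a \<in> T \<Longrightarrow> b \<in> T \<Longrightarrow> a \<noteq> b \<Longrightarrow> r (insert a (insert b X)) = Suc (Suc (r X))"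
    "\<And>e. e \<in> E \<Longrightarrow> e \<notin> cl M X \<Longrightarrow> \<exists>t\<in>T. e \<in> cl M (insert t X)"
    by (rule simp_facts[OF X s(1)]) blast
  have nl: "\<And>t. t \<in> T \<Longrightarrow> t \<notin> cl M X"
  proof
    fix t assume t: "t \<in> T" "t \<in> cl M X"
    then have "r (insert t X) = r X" using in_cl by blast
    then show False using T(4)[OF t(1)] by simp
  qed
  show ?thesis using that[OF s T(3) T(2) nl T(5)] .
qed

lemma TL_same_cl:
  assumes X1: "X1 \<subseteq> E" and X2: "X2 \<subseteq> E" and c1: "X1 \<subseteq> cl M X2" and c2: "X2 \<subseteq> cl M X1"
    and rr: "r X1 = r X2" and g: "si_contract_good M N X1"
  shows "si_contract_good M N X2"
proof -
  obtain S T where S: "simplification (contract M X1) S" "three_connected S" "has_minor S N"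
    "ground S = T" "T \<subseteq> E - X1" "\<And>t. t \<in> T \<Longrightarrow> t \<notin> cl M X1"
    "\<And>a b. a \<in> T \<Longrightarrow> b \<in> T \<Longrightarrow> a \<noteq> b \<Longrightarrow> r (insert a (insert b X1)) = Suc (Suc (r X1))"
    by (rule good_facts[OF X1 g]) blast
  let ?U = "E - cl M X1"
  have clsame: "cl M X1 = cl M X2" using cl_subset_cl[OF c1] cl_subset_cl[OF c2] by blast
  show ?thesis
  proof (rule TL[where ?U1.0 = ?U and ph = "\<lambda>x. x", OF X1 X2 _ _ _ _ _ S(1,2,3)])
    show "?U \<subseteq> E - X1" using cl_sub'[OF X1] by blast
    show "inj_on (\<lambda>x. x) ?U" by simp
    show "(\<lambda>x. x) ` ?U \<subseteq> E - X2" using cl_sub'[OF X2] clsame by auto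
    show "\<And>e. e \<in> E - X2 \<Longrightarrow> e \<notin> cl M X2 \<Longrightarrow> e \<in> (\<lambda>x. x) ` ?U" using clsame by auto
    show "\<And>A. A \<subseteq> ?U \<Longrightarrow> r (A \<union> X1) + r X2 = r ((\<lambda>x. x) ` A \<union> X2) + r X1"
      using rk_same_cl[OF c1 c2] rr by simp
    show "ground S \<subseteq> ?U" using S(4,5,6) by blast
  qed
qed

end

lemma main_proof:
  fixes M :: "'a matroid" and N :: "'b matroid"
    and C :: "'a set" and p y :: 'a and L :: "'a set"
  assumes "matroid M" and "three_connected M" and "simple M"
    and vb: "vertbarrier M N C p"
    and lo: "line_of M C p L"
    and yL: "y \<in> L"
    and nvc: "\<not> vert_contractible M N y"
  shows "\<exists>D. vertbarrier M N D y \<and> L - {y} \<subseteq> D"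
proof -
  interpret tcm M using assms(1,2,3) by unfold_locales
  have coC: "cocircuit M C" and rC: "r C = 3" and pC: "p \<in> cl M C - C"
    and ex: "\<exists>x\<in>C. si_contract_good M N {x, p}"
    using vb unfolding vertbarrier_def by auto
  have CE: "C \<subseteq> E" and rH: "r (E - C) \<noteq> r E" and addc: "\<And>c. c \<in> C \<Longrightarrow> r (insert c (E - C)) = r E"
    using coC unfolding cocircuit_iff by auto
  have pE: "p \<in> E" using pC cl_ground by blast
  have LpC: "L \<subseteq> insert p C" and c1: "card (insert p C - L) = 1" and rL: "r L = 2" and cL: "3 \<le> card L"
    using lo unfolding line_of_def by auto
  obtain z where z: "insert p C - L = {z}" using c1 card_1_singletonE by blast
  have LE: "L \<subseteq> E" using LpC CE pE by blast
  have pL: "p \<in> L"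
  proof (rule ccontr)
    assume "p \<notin> L"
    then have "p \<in> insert p C - L" by blast
    then have "z = p" unfolding z by simp
    have "C \<subseteq> L"
    proof
      fix c assume c: "c \<in> C"
      show "c \<in> L"
      proof (rule ccontr)
        assume "c \<notin> L"
        then have "c \<in> insert p C - L" using c by blast
        then have "c = p" using z \<open>z = p\<close> by blast
        then show False using c pC by blast
      qed
    qed
    moreover have "L \<subseteq> C" using LpC \<open>p \<notin> L\<close> by blast
    ultimately show False using rL rC by simp
  qed
  have zin: "z \<in> insert p C - L" using z by blast
  have zL: "z \<notin> L" using zin by blast
  have zC: "z \<in> C" using zin pL by blast
  have zE: "z \<in> E" using zC CE by blast
  show ?thesis
  proof (cases "y = p")
    case True
    have "L - {p} \<subseteq> C" using LpC by blast
    then show ?thesis using vb True by blast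
  next
    case False
    note yp = False
    have yE: "y \<in> E" using yL LE by blast
    have goodL: "\<exists>a\<in>L - {p}. si_contract_good M N {a, p}"
    proof -
      obtain x where x: "x \<in> C" "si_contract_good M N {x, p}" using ex by blast
      show ?thesis
      proof (cases "x \<in> L")
        case True
        then show ?thesis using x pC by blast
      next
        case False
        then have xz: "x = z" using x z by blast
        let ?H = "E - C"
        have zp: "z \<noteq> p" using zL pL by blast
        have zpE: "{z, p} \<subseteq> E" using zE pE by blast
        have gzp: "si_contract_good M N {z, p}" using x(2) xz by simp
        obtain S T where S: "simplification (contract M {z, p}) S" "three_connected S" "has_minor S N"
          "ground S = T" "T \<subseteq> E - {z, p}" "\<And>t. t \<in> T \<Longrightarrow> t \<notin> cl M {z, p}"
          "\<And>a b. a \<in> T \<Longrightarrow> b \<in> T \<Longrightarrow> a \<noteq> b \<Longrightarrow> r (insert a (insert b {z, p})) = Suc (Suc (r {z, p}))"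
          by (rule good_facts[OF zpE gzp]) blast
        have rzp: "r {z, p} = 2" using rk2[OF zE pE zp] .
        have uniqT: "\<And>a b. a \<in> T \<inter> (L - {p}) \<Longrightarrow> b \<in> T \<inter> (L - {p}) \<Longrightarrow> a = b"
        proof (rule ccontr)
          fix a b assume a: "a \<in> T \<inter> (L - {p})" and b: "b \<in> T \<inter> (L - {p})" and ab: "a \<noteq> b"
          have "r (insert a (insert b {z, p})) = 4" using S(7)[of a b] a b ab rzp by simp
          moreover have "r (insert a (insert b {z, p})) \<le> r (insert z L)" by (rule rk_mono) (use a b pL in blast)
          moreover have "r (insert z L) \<le> Suc (r L)" by (rule rk_insert)
          ultimately show False using rL by simp
        qed
        obtain l1 where l1: "l1 \<in> L" "l1 \<noteq> p" using ex_other[of L p] cL by auto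
        define l0 where "l0 = (if T \<inter> (L - {p}) \<noteq> {} then (SOME l. l \<in> T \<inter> (L - {p})) else l1)"
        have l0L: "l0 \<in> L - {p}"
        proof (cases "T \<inter> (L - {p}) \<noteq> {}")
          case True
          then show ?thesis unfolding l0_def using someI_ex[of "\<lambda>l. l \<in> T \<inter> (L - {p})"] by auto
        next
          case False
          then show ?thesis unfolding l0_def using l1 by auto
        qed
        have TL0: "\<And>t. t \<in> T \<inter> (L - {p}) \<Longrightarrow> t = l0"
        proof -
          fix t assume t: "t \<in> T \<inter> (L - {p})"
          then have ne: "T \<inter> (L - {p}) \<noteq> {}" by blast
          then have "l0 \<in> T \<inter> (L - {p})" unfolding l0_def using someI_ex[of "\<lambda>l. l \<in> T \<inter> (L - {p})"] by auto
          then show "t = l0" using uniqT t by blast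
        qed
        have l0C: "l0 \<in> C" using l0L LpC by blast
        have l0E: "l0 \<in> E" using l0C CE by blast
        have l0z: "l0 \<noteq> z" using l0L zL by blast
        have l0p: "l0 \<noteq> p" using l0L by blast
        define ph where "ph = (\<lambda>e. if e = z then l0 else if e = l0 then z else e)"
        let ?U = "(?H - {p}) \<union> {l0}"
        have notclH: "\<And>c A. c \<in> C \<Longrightarrow> A \<subseteq> ?H \<Longrightarrow> c \<notin> cl M A"
        proof
          fix c A assume c: "c \<in> C" and A: "A \<subseteq> ?H" and cA: "c \<in> cl M A"
          have "c \<in> cl M ?H" using cA cl_mono[OF A] by blast
          then have "r (insert c ?H) = r ?H" by (rule in_cl)
          then show False using addc[OF c] rH by simp
        qed
        have pH: "p \<in> ?H" using pC pE by blast
        have goodl0: "si_contract_good M N {l0, p}"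
        proof (rule TL[where ?U1.0 = ?U and ph = ph, OF zpE _ _ _ _ _ _ S(1,2,3)])
          show "{l0, p} \<subseteq> E" using l0E pE by blast
          show "?U \<subseteq> E - {z, p}" using zC l0E l0z l0p by blast
          show "inj_on ph ?U" unfolding inj_on_def ph_def by auto
          show "ph ` ?U \<subseteq> E - {l0, p}"
            unfolding ph_def using zE zC l0C l0z l0p zp by auto
          show "\<And>e. e \<in> E - {l0, p} \<Longrightarrow> e \<notin> cl M {l0, p} \<Longrightarrow> e \<in> ph ` ?U"
          proof -
            fix e assume e: "e \<in> E - {l0, p}" and en: "e \<notin> cl M {l0, p}"
            have Lcl: "L \<subseteq> cl M {l0, p}" using line_cl[OF LE rL] l0L pL by blast
            show "e \<in> ph ` ?U"
            proof (cases "e \<in> C")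
              case True
              then have "e = z" using Lcl en z by blast
              moreover have "ph l0 = z" unfolding ph_def using l0z by simp
              ultimately show ?thesis by blast
            next
              case False
              then have "e \<in> ?H - {p}" using e by blast
              moreover have "ph e = e" unfolding ph_def using False zC l0C by auto
              ultimately show ?thesis by force
            qed
          qed
          show "\<And>A. A \<subseteq> ?U \<Longrightarrow> r (A \<union> {z, p}) + r {l0, p} = r (ph ` A \<union> {l0, p}) + r {z, p}"
          proof -
            fix A assume A: "A \<subseteq> ?U"
            have r2: "r {l0, p} = 2" using rk2[OF l0E pE l0p] .
            have fixe: "\<And>e. e \<in> A \<Longrightarrow> e \<noteq> l0 \<Longrightarrow> ph e = e"
              unfolding ph_def using A zC by auto
            show "r (A \<union> {z, p}) + r {l0, p} = r (ph ` A \<union> {l0, p}) + r {z, p}"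
            proof (cases "l0 \<in> A")
              case True
              have "ph ` A = insert z (A - {l0})"
              proof
                have zA: "z \<notin> A" using A zC l0z by blast
                show "ph ` A \<subseteq> insert z (A - {l0})"
                proof
                  fix e assume "e \<in> ph ` A"
                  then obtain a where a: "a \<in> A" "e = ph a" by blast
                  show "e \<in> insert z (A - {l0})"
                  proof (cases "a = l0")
                    case True
                    then show ?thesis using a l0z unfolding ph_def by simp
                  next
                    case False
                    then show ?thesis using a fixe by simp
                  qed
                qed
                show "insert z (A - {l0}) \<subseteq> ph ` A"
                proof
                  fix e assume "e \<in> insert z (A - {l0})"
                  then show "e \<in> ph ` A"
                  proof
                    assume "e = z"
                    then have "e = ph l0" unfolding ph_def using l0z by simp
                    then show ?thesis using True by blast
                  next
                    assume "e \<in> A - {l0}"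
                    then show ?thesis using fixe by force
                  qed
                qed
              qed
              then have "ph ` A \<union> {l0, p} = A \<union> {z, p}" using True by blast
              then show ?thesis using r2 rzp by simp
            next
              case False
              then have AH: "A \<subseteq> ?H" and Ap: "p \<notin> A" using A by auto
              have phA: "ph ` A = A" using fixe False by force
              have ipH: "insert p A \<subseteq> ?H" using AH pH by blast
              have "r (insert z (insert p A)) = Suc (r (insert p A))"
                by (rule not_cl_rk[OF zE notclH[OF zC ipH]])
              moreover have "r (insert l0 (insert p A)) = Suc (r (insert p A))"
                by (rule not_cl_rk[OF l0E notclH[OF l0C ipH]])
              moreover have "A \<union> {z, p} = insert z (insert p A)" by blast
              moreover have "A \<union> {l0, p} = insert l0 (insert p A)" by blast
              ultimately show ?thesis using phA r2 rzp by simp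
            qed
          qed
          show "ground S \<subseteq> ?U"
          proof
            fix t assume "t \<in> ground S"
            then have t: "t \<in> T" using S(4) by simp
            then have tE: "t \<in> E - {z, p}" using S(5) by blast
            show "t \<in> ?U"
            proof (cases "t \<in> C")
              case True
              then have "t \<in> L" using z tE by blast
              then have "t = l0" using TL0 t tE by blast
              then show ?thesis by blast
            next
              case False
              then show ?thesis using tE by blast
            qed
          qed
        qed
        then show ?thesis using l0L by blast
      qed
    qed
    obtain a where a: "a \<in> L - {p}" "si_contract_good M N {a, p}" using goodL by blast
    obtain w where w: "w \<in> L" "w \<noteq> y" using ex_other[of L y] cL by auto
    have wE: "w \<in> E" using w LE by blast
    have aE: "a \<in> E" using a LE by blast
    have goodwy: "si_contract_good M N {w, y}"
    proof (rule TL_same_cl[OF _ _ _ _ _ a(2)])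
      show "{a, p} \<subseteq> E" using aE pE by blast
      show "{w, y} \<subseteq> E" using wE yE by blast
      show "{a, p} \<subseteq> cl M {w, y}" using line_cl[OF LE rL w(1) yL w(2)] a pL by blast
      show "{w, y} \<subseteq> cl M {a, p}" using line_cl[OF LE rL _ pL] a w yL by blast
      show "r {a, p} = r {w, y}" using rk2[OF aE pE] rk2[OF wE yE w(2)] a by simp
    qed
    obtain H where H: "H \<subseteq> E" "cl M H = H" "y \<in> H" "w \<notin> H" "r H + 1 = r E" "r (E - H) = 3"
      using G_final[OF wE yE w(2) goodwy nvc] by blast
    let ?D = "E - H"
    have EDH: "E - ?D = H" using H(1) by blast
    have LD: "L - {y} \<subseteq> ?D"
    proof
      fix l assume l: "l \<in> L - {y}"
      show "l \<in> ?D"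
      proof (rule ccontr)
        assume "l \<notin> ?D"
        then have lH: "l \<in> H" using l LE by blast
        have "L \<subseteq> cl M {l, y}" using line_cl[OF LE rL] l yL by blast
        moreover have "cl M {l, y} \<subseteq> H" using cl_pair_sub2[of l H y] lH H(2,3) by simp
        ultimately show False using w H(4) by blast
      qed
    qed
    have coD: "cocircuit M ?D"
      unfolding cocircuit_iff EDH
    proof (intro conjI ballI)
      show "?D \<subseteq> E" by blast
      show "r H \<noteq> r E" using H(5) by simp
      fix d assume d: "d \<in> ?D"
      have "d \<notin> cl M H" using d H(2) by simp
      then show "r (insert d H) = r E" using not_cl_rk[of d H] d H(5) by simp
    qed
    obtain l where l: "l \<in> L" "l \<noteq> y" "l \<noteq> w" using ex_other2[of L y w] cL by auto
    have ycl: "y \<in> cl M ?D"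
    proof -
      have "y \<in> cl M {w, l}" using line_cl[OF LE rL w(1) l(1)] yL l by blast
      moreover have "cl M {w, l} \<subseteq> cl M ?D" using cl_mono[of "{w, l}" ?D] LD w l by blast
      ultimately show ?thesis by blast
    qed
    have "vertbarrier M N ?D y"
      unfolding vertbarrier_def
    proof (intro conjI)
      show "cocircuit M ?D" by (rule coD)
      show "r ?D = 3" by (rule H(6))
      show "y \<in> cl M ?D - ?D" using ycl H(3) by blast
      show "\<exists>x\<in>?D. si_contract_good M N {x, y}" using goodwy w(1) H(4) wE by blast
    qed
    then show ?thesis using LD by blast
  qed
qed


theorem lemma5p12:
  fixes M :: "'a matroid" and N :: "'b matroid"
    and C :: "'a set" and p y :: 'a and L :: "'a set"
  assumes "matroid M" and "three_connected M" and "simple M"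
    and "matroid N" and "three_connected N" and "simple N"
    and "has_minor M N"
    and "vertbarrier M N C p"
    and "\<not> connected (restrict M (insert p C))"
    and "line_of M C p L"
    and "y \<in> L"
    and "\<not> vert_contractible M N y"
  shows "\<exists>D. vertbarrier M N D y \<and> L - {y} \<subseteq> D"
  using main_proof[OF assms(1,2,3,8,10,11,12)] .

end
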